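(* Let $U:\mathbb{C}^*\to\mathbb{C}$ be a reasonable expansion with unique restrictions, between locally small categories, which has the expansion property; assume all morphisms in $\mathbb{C}$ are monomorphisms and $\mathbb{C}^*$ is directed. Let $A\in\mathrm{Ob}(\mathbb{C})$ be such that $\mathrm{Aut}(A)$ is finite. (a) $t^\sim_{\mathbb{C}}(A)$ is finite if and only if $U^{-1}(A)$ is finite and $t^\sim_{\mathbb{C}^*}(\mathcal{A})<\infty$ for all $\mathcal{A}\in U^{-1}(A)$, and in that case $$t^\sim_{\mathbb{C}}(A)=\sum_{\mathcal{A}\in U^{-1}(A)}\frac{|\mathrm{Aut}(\mathcal{A})|}{|\mathrm{Aut}(A)|}\cdot t^\sim_{\mathbb{C}^*}(\mathcal{A}).$$ (b) If $U^{-1}(A)$ is finite and $t^\sim_{\mathbb{C}^*}(\mathcal{A})<\infty$ for all $\mathcal{A}\in U^{-1}(A)$, and $\mathcal{A}_1,\dots,\mathcal{A}_n$ are representatives of the isomorphism classes (in $\mathbb{C}^*$) of objects in $U^{-1}(A)$, then $t^\sim_{\mathbb{C}}(A)=\sum_{i=1}^n t^\sim_{\mathbb{C}^*}(\mathcal{A}_i)$.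
   Context: Write $X\to Y$ if $\hom(X,Y)\ne\varnothing$; a category is directed if for all objects $A,B$ there is $C$ with $A\to C$, $B\to C$. An expansion of $\mathbb{C}$ is a category $\mathbb{C}^*$ with a functor $U:\mathbb{C}^*\to\mathbb{C}$ surjective on objects and injective on hom-sets; we regard $\hom_{\mathbb{C}^*}(\mathcal{A},\mathcal{B})\subseteq\hom_{\mathbb{C}}(U\mathcal{A},U\mathcal{B})$, and $U^{-1}(A)=\{\mathcal{A}:U(\mathcal{A})=A\}$. $U$ is reasonable if for every $e\in\hom(A,B)$ and $\mathcal{A}\in U^{-1}(A)$ there is $\mathcal{B}\in U^{-1}(B)$ with $e\in\hom(\mathcal{A},\mathcal{B})$; it has unique restrictions if for every $\mathcal{B}$ and $e\in\hom(A,U(\mathcal{B}))$ there is exactly one $\mathcal{A}\in U^{-1}(A)$ with $e\in\hom(\mathcal{A},\mathcal{B})$; it has the expansion property if for every $A$ there is $B$ with $\mathcal{A}\to\mathcal{B}$ for all $\mathcal{A}\in U^{-1}(A)$, $\mathcal{B}\in U^{-1}(B)$. In a category $\mathbb{D}$: for $f,f'\in\hom(A,B)$, $f\sim_A f'$ iff $f'=f\cdot\alpha$ for some $\alpha\in\mathrm{Aut}(A)$; $\binom{B}{A}=\hom(A,B)/{\sim_A}$, and $w\cdot(f/{\sim_A})=(w\cdot f)/{\sim_A}$. $C\overset{\sim}{\to}(B)^A_{k,t}$ means that for every $\chi:\binom{C}{A}\to\{0,\dots,k-1\}$ there is $w\in\hom(B,C)$ with $|\chi(w\cdot\binom{B}{A})|\le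 t$; $t^\sim_{\mathbb{D}}(A)$ is the least positive $n$ such that for all $k\ge2$ and all $B$ there is $C$ with $C\overset{\sim}{\to}(B)^A_{k,n}$, and $\infty$ otherwise. *)

theory Defs
  imports "HOL-Library.Extended_Nat" Complex_Main
begin

text \<open>A (locally small) category: objects, hom-sets, composition (cComp g f = g after f),
  identities. Composition w.f in the paper is cComp C w f.\<close>
record ('o, 'm) cat =
  cOb :: "'o set"
  cHom :: "'o \<Rightarrow> 'o \<Rightarrow> 'm set"
  cComp :: "'m \<Rightarrow> 'm \<Rightarrow> 'm"
  cId :: "'o \<Rightarrow> 'm"

definition is_category :: "('o, 'm) cat \<Rightarrow> bool" where
  "is_category C \<longleftrightarrow>
     (\<forall>A\<in>cOb C. \<forall>B\<in>cOb C. \<forall>D\<in>cOb C. \<forall>f\<in>cHom C A B. \<forall>g\<in>cHom C B D.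
        cComp C g f \<in> cHom C A D) \<and>
     (\<forall>A\<in>cOb C. \<forall>B\<in>cOb C. \<forall>D\<in>cOb C. \<forall>E\<in>cOb C.
        \<forall>f\<in>cHom C A B. \<forall>g\<in>cHom C B D. \<forall>h\<in>cHom C D E.
        cComp C h (cComp C g f) = cComp C (cComp C h g) f) \<and>
     (\<forall>A\<in>cOb C. cId C A \<in> cHom C A A) \<and>
     (\<forall>A\<in>cOb C. \<forall>B\<in>cOb C. \<forall>f\<in>cHom C A B.
        cComp C f (cId C A) = f \<and> cComp C (cId C B) f = f)"

definition arr :: "('o, 'm) cat \<Rightarrow> 'o \<Rightarrow> 'o \<Rightarrow> bool" where
  "arr C X Y \<longleftrightarrow> cHom C X Y \<noteq> {}"

definition directed :: "('o, 'm) cat \<Rightarrow> bool" where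
  "directed C \<longleftrightarrow> (\<forall>A\<in>cOb C. \<forall>B\<in>cOb C. \<exists>D\<in>cOb C. arr C A D \<and> arr C B D)"

definition all_mono :: "('o, 'm) cat \<Rightarrow> bool" where
  "all_mono C \<longleftrightarrow> (\<forall>A\<in>cOb C. \<forall>B\<in>cOb C. \<forall>X\<in>cOb C. \<forall>f\<in>cHom C A B.
      \<forall>g\<in>cHom C X A. \<forall>h\<in>cHom C X A. cComp C f g = cComp C f h \<longrightarrow> g = h)"

definition Aut :: "('o, 'm) cat \<Rightarrow> 'o \<Rightarrow> 'm set" where
  "Aut C A = {f \<in> cHom C A A. \<exists>g\<in>cHom C A A. cComp C g f = cId C A \<and> cComp C f g = cId C A}"

definition isomorphic :: "('o, 'm) cat \<Rightarrow> 'o \<Rightarrow> 'o \<Rightarrow> bool" where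
  "isomorphic C A B \<longleftrightarrow> (\<exists>f\<in>cHom C A B. \<exists>g\<in>cHom C B A.
      cComp C g f = cId C A \<and> cComp C f g = cId C B)"

definition simcls :: "('o, 'm) cat \<Rightarrow> 'o \<Rightarrow> 'o \<Rightarrow> 'm \<Rightarrow> 'm set" where
  "simcls C A B f = {f' \<in> cHom C A B. \<exists>\<alpha>\<in>Aut C A. f' = cComp C f \<alpha>}"

definition binom :: "('o, 'm) cat \<Rightarrow> 'o \<Rightarrow> 'o \<Rightarrow> 'm set set" where
  "binom C B A = simcls C A B ` cHom C A B"

definition binom_act :: "('o, 'm) cat \<Rightarrow> 'o \<Rightarrow> 'm \<Rightarrow> 'o \<Rightarrow> 'o \<Rightarrow> 'm set set" where
  "binom_act C D w B A = (\<lambda>f. simcls C A D (cComp C w f)) ` cHom C A B"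

definition ramsey_arrow :: "('o, 'm) cat \<Rightarrow> 'o \<Rightarrow> 'o \<Rightarrow> 'o \<Rightarrow> nat \<Rightarrow> nat \<Rightarrow> bool" where
  "ramsey_arrow C D B A k t \<longleftrightarrow>
     (\<forall>\<chi> :: 'm set \<Rightarrow> nat. (\<forall>X\<in>binom C D A. \<chi> X < k) \<longrightarrow>
        (\<exists>w\<in>cHom C B D. card (\<chi> ` binom_act C D w B A) \<le> t))"

definition small_ramsey_prop :: "('o, 'm) cat \<Rightarrow> 'o \<Rightarrow> nat \<Rightarrow> bool" where
  "small_ramsey_prop C A n \<longleftrightarrow>
     (\<forall>k\<ge>2. \<forall>B\<in>cOb C. \<exists>D\<in>cOb C. ramsey_arrow C D B A k n)"

definition tsim :: "('o, 'm) cat \<Rightarrow> 'o \<Rightarrow> enat" where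
  "tsim C A = (if \<exists>n>0. small_ramsey_prop C A n
               then enat (LEAST n. n > 0 \<and> small_ramsey_prop C A n) else \<infinity>)"

text \<open>Expansion U : C* \<rightarrow> C, with hom_{C*}(a,b) \<subseteq> hom_C(U a, U b) (U identity on morphisms,
  hence a functor injective on hom-sets), composition and identities inherited from C.\<close>
definition expansion :: "('e, 'm) cat \<Rightarrow> ('o, 'm) cat \<Rightarrow> ('e \<Rightarrow> 'o) \<Rightarrow> bool" where
  "expansion CS C U \<longleftrightarrow> is_category CS \<and> is_category C \<and>
     U ` cOb CS = cOb C \<and>
     (\<forall>a\<in>cOb CS. \<forall>b\<in>cOb CS. cHom CS a b \<subseteq> cHom C (U a) (U b)) \<and>
     cComp CS = cComp C \<and>
     (\<forall>a\<in>cOb CS. cId CS a = cId C (U a))"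

definition fiber :: "('e, 'm) cat \<Rightarrow> ('e \<Rightarrow> 'o) \<Rightarrow> 'o \<Rightarrow> 'e set" where
  "fiber CS U A = {a \<in> cOb CS. U a = A}"

definition reasonable :: "('e, 'm) cat \<Rightarrow> ('o, 'm) cat \<Rightarrow> ('e \<Rightarrow> 'o) \<Rightarrow> bool" where
  "reasonable CS C U \<longleftrightarrow> (\<forall>A\<in>cOb C. \<forall>B\<in>cOb C. \<forall>e\<in>cHom C A B. \<forall>a\<in>fiber CS U A.
      \<exists>b\<in>fiber CS U B. e \<in> cHom CS a b)"

definition unique_restrictions :: "('e, 'm) cat \<Rightarrow> ('o, 'm) cat \<Rightarrow> ('e \<Rightarrow> 'o) \<Rightarrow> bool" where
  "unique_restrictions CS C U \<longleftrightarrow> (\<forall>b\<in>cOb CS. \<forall>A\<in>cOb C. \<forall>e\<in>cHom C A (U b).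
      \<exists>!a. a \<in> fiber CS U A \<and> e \<in> cHom CS a b)"

definition expansion_property :: "('e, 'm) cat \<Rightarrow> ('o, 'm) cat \<Rightarrow> ('e \<Rightarrow> 'o) \<Rightarrow> bool" where
  "expansion_property CS C U \<longleftrightarrow> (\<forall>A\<in>cOb C. \<exists>B\<in>cOb C.
      \<forall>a\<in>fiber CS U A. \<forall>b\<in>fiber CS U B. arr CS a b)"

end

theory Submission
  imports Defs
begin

definition isoW :: "('o,'m) cat \<Rightarrow> 'o \<Rightarrow> 'o \<Rightarrow> 'm \<Rightarrow> 'm \<Rightarrow> bool" where
  "isoW X A B f g \<longleftrightarrow> f \<in> cHom X A B \<and> g \<in> cHom X B A \<and> cComp X g f = cId X A \<and> cComp X f g = cId X B"

lemma isomorphic_isoW: "isomorphic X A B \<longleftrightarrow> (\<exists>f g. isoW X A B f g)"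
  unfolding isomorphic_def isoW_def by blast

locale cat_ax = fixes X :: "('o,'m) cat" assumes cat: "is_category X"
begin

lemma comp_in: "A \<in> cOb X \<Longrightarrow> B \<in> cOb X \<Longrightarrow> D \<in> cOb X \<Longrightarrow> f \<in> cHom X A B \<Longrightarrow> g \<in> cHom X B D
   \<Longrightarrow> cComp X g f \<in> cHom X A D"
  using cat unfolding is_category_def by blast

lemma assoc: "A \<in> cOb X \<Longrightarrow> B \<in> cOb X \<Longrightarrow> D \<in> cOb X \<Longrightarrow> E \<in> cOb X \<Longrightarrow> f \<in> cHom X A B \<Longrightarrow> g \<in> cHom X B D
   \<Longrightarrow> h \<in> cHom X D E \<Longrightarrow> cComp X h (cComp X g f) = cComp X (cComp X h g) f"
  using cat unfolding is_category_def by blast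

lemma id_in: "A \<in> cOb X \<Longrightarrow> cId X A \<in> cHom X A A"
  using cat unfolding is_category_def by blast

lemma id_r: "A \<in> cOb X \<Longrightarrow> B \<in> cOb X \<Longrightarrow> f \<in> cHom X A B \<Longrightarrow> cComp X f (cId X A) = f"
  using cat unfolding is_category_def by blast

lemma id_l: "A \<in> cOb X \<Longrightarrow> B \<in> cOb X \<Longrightarrow> f \<in> cHom X A B \<Longrightarrow> cComp X (cId X B) f = f"
  using cat unfolding is_category_def by blast

lemma aut_hom: "\<alpha> \<in> Aut X A \<Longrightarrow> \<alpha> \<in> cHom X A A"
  unfolding Aut_def by blast

lemma aut_id: "A \<in> cOb X \<Longrightarrow> cId X A \<in> Aut X A"
  unfolding Aut_def using id_in id_l by fastforce

lemma aut_inv: "\<alpha> \<in> Aut X A \<Longrightarrow> \<exists>\<beta>\<in>Aut X A. cComp X \<beta> \<alpha> = cId X A \<and> cComp X \<alpha> \<beta> = cId X A"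
  unfolding Aut_def by blast

lemma aut_comp:
  assumes A: "A \<in> cOb X" and a: "\<alpha> \<in> Aut X A" and b: "\<beta> \<in> Aut X A"
  shows "cComp X \<alpha> \<beta> \<in> Aut X A"
proof -
  obtain a' where a': "a' \<in> cHom X A A" "cComp X a' \<alpha> = cId X A" "cComp X \<alpha> a' = cId X A"
    using a unfolding Aut_def by blast
  obtain b' where b': "b' \<in> cHom X A A" "cComp X b' \<beta> = cId X A" "cComp X \<beta> b' = cId X A"
    using b unfolding Aut_def by blast
  have ah: "\<alpha> \<in> cHom X A A" and bh: "\<beta> \<in> cHom X A A" using a b aut_hom by auto
  have ab: "cComp X \<alpha> \<beta> \<in> cHom X A A" using comp_in A ah bh by blast
  have "cComp X (cComp X b' a') (cComp X \<alpha> \<beta>) = cComp X b' (cComp X a' (cComp X \<alpha> \<beta>))"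
    using assoc[OF A A A A ab a'(1) b'(1)] by simp
  also have "\<dots> = cComp X b' (cComp X (cComp X a' \<alpha>) \<beta>)"
    using assoc[OF A A A A bh ah a'(1)] by simp
  also have "\<dots> = cId X A" using a' b' id_l A bh by simp
  finally have 1: "cComp X (cComp X b' a') (cComp X \<alpha> \<beta>) = cId X A" .
  have ba: "cComp X b' a' \<in> cHom X A A" using comp_in A a'(1) b'(1) by blast
  have "cComp X (cComp X \<alpha> \<beta>) (cComp X b' a') = cComp X \<alpha> (cComp X \<beta> (cComp X b' a'))"
    using assoc[OF A A A A ba bh ah] by simp
  also have "\<dots> = cComp X \<alpha> (cComp X (cComp X \<beta> b') a')"
    using assoc[OF A A A A a'(1) b'(1) bh] by simp
  also have "\<dots> = cId X A" using a' b' id_l A a'(1) by simp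
  finally have 2: "cComp X (cComp X \<alpha> \<beta>) (cComp X b' a') = cId X A" .
  show ?thesis unfolding Aut_def using 1 2 comp_in A ah bh a'(1) b'(1) by blast
qed

lemma simcls_aut:
  assumes A: "A \<in> cOb X" and B: "B \<in> cOb X" and f: "f \<in> cHom X A B" and g: "\<gamma> \<in> Aut X A"
  shows "simcls X A B (cComp X f \<gamma>) = simcls X A B f"
proof -
  obtain g' where g': "g' \<in> Aut X A" "cComp X g' \<gamma> = cId X A" "cComp X \<gamma> g' = cId X A"
    using aut_inv g by blast
  have gh: "\<gamma> \<in> cHom X A A" "g' \<in> cHom X A A" using g g' aut_hom by auto
  show ?thesis
  proof (intro set_eqI iffI)
    fix h assume "h \<in> simcls X A B (cComp X f \<gamma>)"
    then obtain a where a: "a \<in> Aut X A" "h \<in> cHom X A B" "h = cComp X (cComp X f \<gamma>) a"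
      unfolding simcls_def by blast
    have "h = cComp X f (cComp X \<gamma> a)" using a assoc[OF A A A B aut_hom[OF a(1)] gh(1) f] by simp
    moreover have "cComp X \<gamma> a \<in> Aut X A" using aut_comp A g a by blast
    ultimately show "h \<in> simcls X A B f" unfolding simcls_def using a by blast
  next
    fix h assume "h \<in> simcls X A B f"
    then obtain a where a: "a \<in> Aut X A" "h \<in> cHom X A B" "h = cComp X f a"
      unfolding simcls_def by blast
    have ah: "a \<in> cHom X A A" using a aut_hom by blast
    have ga: "cComp X g' a \<in> cHom X A A" using comp_in A gh ah by blast
    have "cComp X (cComp X f \<gamma>) (cComp X g' a) = cComp X f (cComp X \<gamma> (cComp X g' a))"
      using assoc[OF A A A B ga gh(1) f] by simp
    also have "\<dots> = cComp X f (cComp X (cComp X \<gamma> g') a)"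
      using assoc[OF A A A A ah gh(2) gh(1)] by simp
    also have "\<dots> = h" using g' id_l A ah a by simp
    finally have "h = cComp X (cComp X f \<gamma>) (cComp X g' a)" by simp
    moreover have "cComp X g' a \<in> Aut X A" using aut_comp A g' a by blast
    ultimately show "h \<in> simcls X A B (cComp X f \<gamma>)" unfolding simcls_def using a by blast
  qed
qed

lemma iso_refl: "A \<in> cOb X \<Longrightarrow> isomorphic X A A"
  unfolding isomorphic_def using id_in id_l by fastforce

lemma iso_sym: "isomorphic X A B \<Longrightarrow> isomorphic X B A"
  unfolding isomorphic_def by blast

lemma iso_trans:
  assumes A: "A \<in> cOb X" and B: "B \<in> cOb X" and D: "D \<in> cOb X"
    and ab: "isomorphic X A B" and bd: "isomorphic X B D"
  shows "isomorphic X A D"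
proof -
  obtain f g where fg: "f \<in> cHom X A B" "g \<in> cHom X B A" "cComp X g f = cId X A" "cComp X f g = cId X B"
    using ab unfolding isomorphic_def by blast
  obtain f' g' where fg': "f' \<in> cHom X B D" "g' \<in> cHom X D B" "cComp X g' f' = cId X B" "cComp X f' g' = cId X D"
    using bd unfolding isomorphic_def by blast
  have c1: "cComp X f' f \<in> cHom X A D" "cComp X g g' \<in> cHom X D A"
    using comp_in A B D fg fg' by blast+
  have "cComp X (cComp X g g') (cComp X f' f) = cComp X g (cComp X g' (cComp X f' f))"
    using assoc[OF A D B A c1(1) fg'(2) fg(2)] by simp
  also have "\<dots> = cComp X g (cComp X (cComp X g' f') f)"
    using assoc[OF A B D B fg(1) fg'(1) fg'(2)] by simp
  also have "\<dots> = cId X A" using fg fg' id_l A B by simp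
  finally have 1: "cComp X (cComp X g g') (cComp X f' f) = cId X A" .
  have "cComp X (cComp X f' f) (cComp X g g') = cComp X f' (cComp X f (cComp X g g'))"
    using assoc[OF D A B D c1(2) fg(1) fg'(1)] by simp
  also have "\<dots> = cComp X f' (cComp X (cComp X f g) g')"
    using assoc[OF D B A B fg'(2) fg(2) fg(1)] by simp
  also have "\<dots> = cId X D" using fg fg' id_l B D by simp
  finally have 2: "cComp X (cComp X f' f) (cComp X g g') = cId X D" .
  show ?thesis unfolding isomorphic_def using 1 2 comp_in A B D fg fg' by blast
qed

lemma isoW_sym: "isoW X A B f g \<Longrightarrow> isoW X B A g f"
  unfolding isoW_def by blast

lemma isoW_id: "A \<in> cOb X \<Longrightarrow> isoW X A A (cId X A) (cId X A)"
  unfolding isoW_def using id_in id_l by fastforce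

lemma isoW_aut: "isoW X A A f g \<Longrightarrow> f \<in> Aut X A"
  unfolding isoW_def Aut_def by blast

lemma isoW_comp:
  assumes A: "A \<in> cOb X" and B: "B \<in> cOb X" and D: "D \<in> cOb X"
    and ab: "isoW X A B f g" and bd: "isoW X B D f' g'"
  shows "isoW X A D (cComp X f' f) (cComp X g g')"
proof -
  have fg: "f \<in> cHom X A B" "g \<in> cHom X B A" "cComp X g f = cId X A" "cComp X f g = cId X B"
    using ab unfolding isoW_def by blast+
  have fg': "f' \<in> cHom X B D" "g' \<in> cHom X D B" "cComp X g' f' = cId X B" "cComp X f' g' = cId X D"
    using bd unfolding isoW_def by blast+
  have c1: "cComp X f' f \<in> cHom X A D" "cComp X g g' \<in> cHom X D A"
    using comp_in A B D fg fg' by blast+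
  have "cComp X (cComp X g g') (cComp X f' f) = cComp X g (cComp X g' (cComp X f' f))"
    using assoc[OF A D B A c1(1) fg'(2) fg(2)] by simp
  also have "\<dots> = cComp X g (cComp X (cComp X g' f') f)"
    using assoc[OF A B D B fg(1) fg'(1) fg'(2)] by simp
  also have "\<dots> = cId X A" using fg fg' id_l A B by simp
  finally have 1: "cComp X (cComp X g g') (cComp X f' f) = cId X A" .
  have "cComp X (cComp X f' f) (cComp X g g') = cComp X f' (cComp X f (cComp X g g'))"
    using assoc[OF D A B D c1(2) fg(1) fg'(1)] by simp
  also have "\<dots> = cComp X f' (cComp X (cComp X f g) g')"
    using assoc[OF D B A B fg'(2) fg(2) fg(1)] by simp
  also have "\<dots> = cId X D" using fg fg' id_l B D by simp
  finally have 2: "cComp X (cComp X f' f) (cComp X g g') = cId X D" .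
  show ?thesis unfolding isoW_def using 1 2 c1 by blast
qed

lemma aut_isoW: "\<alpha> \<in> Aut X A \<Longrightarrow> \<exists>\<beta>. isoW X A A \<alpha> \<beta>"
  unfolding isoW_def Aut_def by blast

lemma simcls_self: "A \<in> cOb X \<Longrightarrow> B \<in> cOb X \<Longrightarrow> f \<in> cHom X A B \<Longrightarrow> f \<in> simcls X A B f"
  unfolding simcls_def using aut_id id_r by (metis (mono_tags, lifting) mem_Collect_eq)

lemma simcls_mem: "h \<in> simcls X A B f \<Longrightarrow> h \<in> cHom X A B \<and> (\<exists>\<alpha>\<in>Aut X A. h = cComp X f \<alpha>)"
  unfolding simcls_def by blast

lemma arr_trans: "A \<in> cOb X \<Longrightarrow> B \<in> cOb X \<Longrightarrow> D \<in> cOb X \<Longrightarrow> arr X A B \<Longrightarrow> arr X B D \<Longrightarrow> arr X A D"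
  unfolding arr_def using comp_in by blast

lemma srp_zero:
  assumes A: "A \<in> cOb X" shows "\<not> small_ramsey_prop X A 0"
proof
  assume "small_ramsey_prop X A 0"
  then obtain D where D: "D \<in> cOb X" "ramsey_arrow X D A A 2 0"
    unfolding small_ramsey_prop_def using A by fastforce
  obtain w where w: "w \<in> cHom X A D" "card ((\<lambda>_. 0::nat) ` binom_act X D w A A) \<le> 0"
    using spec[OF D(2)[unfolded ramsey_arrow_def], of "\<lambda>_. 0::nat"] by auto
  have "binom_act X D w A A \<noteq> {}" unfolding binom_act_def using id_in A by blast
  then have "(\<lambda>_. 0::nat) ` binom_act X D w A A = {0}" by auto
  then show False using w by simp
qed

lemma srp_mono: "small_ramsey_prop X A n \<Longrightarrow> n \<le> m \<Longrightarrow> small_ramsey_prop X A m"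
  unfolding small_ramsey_prop_def ramsey_arrow_def by (meson le_trans)

lemma tsim_fin:
  assumes A: "A \<in> cOb X" and t: "tsim X A = enat t"
  shows "small_ramsey_prop X A t" "\<And>n. n < t \<Longrightarrow> \<not> small_ramsey_prop X A n"
proof -
  have ex: "\<exists>n>0. small_ramsey_prop X A n" using t unfolding tsim_def by (auto split: if_splits)
  have tt: "t = (LEAST n. n > 0 \<and> small_ramsey_prop X A n)" using t ex unfolding tsim_def by simp
  show "small_ramsey_prop X A t" using LeastI_ex[OF ex] tt by simp
  fix n assume n: "n < t"
  show "\<not> small_ramsey_prop X A n"
  proof (cases "n = 0")
    case True then show ?thesis using srp_zero A by simp
  next
    case False then show ?thesis using not_less_Least[of n "\<lambda>n. n > 0 \<and> small_ramsey_prop X A n"] n tt by auto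
  qed
qed

lemma tsim_inf:
  assumes A: "A \<in> cOb X" and t: "tsim X A = \<infinity>"
  shows "\<not> small_ramsey_prop X A n"
proof (cases "n = 0")
  case True then show ?thesis using srp_zero A by simp
next
  case False
  have "\<not> (\<exists>n>0. small_ramsey_prop X A n)" using t unfolding tsim_def by (auto split: if_splits)
  then show ?thesis using False by blast
qed

lemma tsim_eqI:
  assumes A: "A \<in> cOb X" and s: "small_ramsey_prop X A t" and l: "\<And>n. n < t \<Longrightarrow> \<not> small_ramsey_prop X A n"
  shows "tsim X A = enat t"
proof -
  have t0: "t > 0" using s srp_zero A by (metis gr0I)
  have "(LEAST n. n > 0 \<and> small_ramsey_prop X A n) = t"
    by (rule Least_equality) (use s t0 l in \<open>auto simp: not_less[symmetric]\<close>)
  then show ?thesis unfolding tsim_def using s t0 by auto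
qed

lemma tsim_le:
  assumes A: "A \<in> cOb X" and s: "small_ramsey_prop X A t"
  shows "tsim X A \<noteq> \<infinity> \<and> the_enat (tsim X A) \<le> t"
proof (cases "tsim X A")
  case (enat n)
  then show ?thesis using tsim_fin(2)[OF A enat] s by (auto simp: not_less[symmetric])
next
  case infinity then show ?thesis using tsim_inf[OF A] s by blast
qed

end

locale exp_setup =
  fixes C :: "('o,'m) cat" and CS :: "('e,'m) cat" and U :: "'e \<Rightarrow> 'o"
  assumes ex: "expansion CS C U" and ur: "unique_restrictions CS C U"
    and ep: "expansion_property CS C U" and mono: "all_mono C" and dir: "directed CS"
begin

sublocale C: cat_ax C using ex unfolding expansion_def cat_ax_def by blast
sublocale S: cat_ax CS using ex unfolding expansion_def cat_ax_def by blast

lemma compS[simp]: "cComp CS = cComp C"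
  using ex unfolding expansion_def by blast

lemma idS: "a \<in> cOb CS \<Longrightarrow> cId CS a = cId C (U a)"
  using ex unfolding expansion_def by blast

lemma homS: "a \<in> cOb CS \<Longrightarrow> b \<in> cOb CS \<Longrightarrow> f \<in> cHom CS a b \<Longrightarrow> f \<in> cHom C (U a) (U b)"
  using ex unfolding expansion_def by blast

lemma U_ob: "a \<in> cOb CS \<Longrightarrow> U a \<in> cOb C"
  using ex unfolding expansion_def by blast

lemma fiber_iff: "a \<in> fiber CS U A \<longleftrightarrow> a \<in> cOb CS \<and> U a = A"
  unfolding fiber_def by blast

lemma U_surj: "A \<in> cOb C \<Longrightarrow> \<exists>a. a \<in> fiber CS U A"
proof -
  assume "A \<in> cOb C"
  then have "A \<in> U ` cOb CS" using ex unfolding expansion_def by simp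
  then show ?thesis unfolding fiber_def by blast
qed

lemma restr_ex1: "b \<in> cOb CS \<Longrightarrow> A \<in> cOb C \<Longrightarrow> e \<in> cHom C A (U b) \<Longrightarrow>
    \<exists>!a. a \<in> fiber CS U A \<and> e \<in> cHom CS a b"
  using ur unfolding unique_restrictions_def by blast

lemma restr_uniq: "a \<in> fiber CS U A \<Longrightarrow> a' \<in> fiber CS U A \<Longrightarrow> b \<in> cOb CS \<Longrightarrow>
   e \<in> cHom CS a b \<Longrightarrow> e \<in> cHom CS a' b \<Longrightarrow> a = a'"
  using restr_ex1[of b A e] homS U_ob fiber_iff by metis

lemma restr_obtain:
  assumes "b \<in> cOb CS" "A \<in> cOb C" "e \<in> cHom C A (U b)"
  obtains a where "a \<in> fiber CS U A" "e \<in> cHom CS a b"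
  using restr_ex1[OF assms] by blast

lemma isoW_S_C: "a \<in> fiber CS U A \<Longrightarrow> b \<in> fiber CS U A \<Longrightarrow> isoW CS a b f g \<Longrightarrow> isoW C A A f g"
  unfolding isoW_def fiber_iff using homS idS by fastforce

lemma autS_sub: "a \<in> cOb CS \<Longrightarrow> Aut CS a \<subseteq> Aut C (U a)"
  unfolding Aut_def using homS idS by fastforce

lemma aut_restr:
  assumes A: "A \<in> cOb C" and iso: "isoW C A A \<alpha> \<beta>" and x: "x \<in> fiber CS U A" and r: "r \<in> fiber CS U A"
    and ax: "\<alpha> \<in> cHom CS x r"
  shows "isoW CS x r \<alpha> \<beta>"
proof -
  have xo: "x \<in> cOb CS" "U x = A" and ro: "r \<in> cOb CS" "U r = A" using x r fiber_iff by auto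
  have bh: "\<beta> \<in> cHom C A A" using iso unfolding isoW_def by blast
  obtain x' where x': "x' \<in> fiber CS U A" "\<beta> \<in> cHom CS x' x"
    using restr_obtain[OF xo(1) A] bh xo by metis
  have x'o: "x' \<in> cOb CS" using x' fiber_iff by auto
  have "cComp CS \<alpha> \<beta> \<in> cHom CS x' r" using S.comp_in[OF x'o xo(1) ro(1) x'(2) ax] .
  moreover have "cComp CS \<alpha> \<beta> = cId CS r" using iso idS[OF ro(1)] ro unfolding isoW_def by simp
  ultimately have "cId CS r \<in> cHom CS x' r" by simp
  then have "x' = r" using restr_uniq[OF x'(1) r ro(1)] S.id_in[OF ro(1)] by blast
  then show ?thesis using iso ax x' idS xo ro unfolding isoW_def by auto
qed

lemma dir_bound: "finite T \<Longrightarrow> T \<noteq> {} \<Longrightarrow> T \<subseteq> cOb CS \<Longrightarrow> \<exists>b\<in>cOb CS. \<forall>x\<in>T. arr CS x b"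
proof (induction T rule: finite_ne_induct)
  case (singleton x)
  then show ?case using S.id_in unfolding arr_def by blast
next
  case (insert x F)
  then obtain b where b: "b \<in> cOb CS" "\<forall>y\<in>F. arr CS y b" by auto
  obtain b' where b': "b' \<in> cOb CS" "arr CS x b'" "arr CS b b'"
    using dir b insert.prems unfolding directed_def by blast
  have "\<forall>y\<in>F. arr CS y b'" using S.arr_trans b b' insert.prems by blast
  then show ?case using b' by blast
qed


lemma class_key:
  assumes A: "A \<in> cOb C" and d: "d \<in> cOb CS" and x: "x \<in> fiber CS U A"
    and h: "h \<in> cHom CS x d" and f: "f \<in> simcls C A (U d) h"
    and a: "a \<in> fiber CS U A" and fa: "f \<in> cHom CS a d"
  shows "isomorphic CS x a"
    and "\<And>\<alpha> \<beta>. isoW CS x a \<alpha> \<beta> \<Longrightarrow> simcls CS x d (cComp C f \<alpha>) = simcls CS x d h"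
proof -
  have xo: "x \<in> cOb CS" "U x = A" and ao: "a \<in> cOb CS" "U a = A" using x a fiber_iff by auto
  have hC: "h \<in> cHom C A (U d)" using homS[OF xo(1) d h] xo by simp
  obtain \<gamma> where g: "\<gamma> \<in> Aut C A" "f = cComp C h \<gamma>" using C.simcls_mem[OF f] by blast
  obtain \<gamma>' where gi: "isoW C A A \<gamma> \<gamma>'" using C.aut_isoW[OF g(1)] by blast
  have gh: "\<gamma> \<in> cHom C A A" using g C.aut_hom by blast
  obtain a' where a': "a' \<in> fiber CS U A" "\<gamma> \<in> cHom CS a' x"
    using restr_obtain[OF xo(1) A] gh xo by metis
  have a'o: "a' \<in> cOb CS" using a' fiber_iff by auto
  have "f \<in> cHom CS a' d" using S.comp_in[OF a'o xo(1) d a'(2) h] g by simp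
  then have "a' = a" using restr_uniq[OF a'(1) a d _ fa] by blast
  then have gS: "isoW CS a x \<gamma> \<gamma>'" using aut_restr[OF A gi a x] a' by simp
  then show "isomorphic CS x a" unfolding isomorphic_isoW using S.isoW_sym[OF gS] by blast
  fix \<alpha> \<beta> assume ab: "isoW CS x a \<alpha> \<beta>"
  have c: "isoW CS x x (cComp CS \<gamma> \<alpha>) (cComp CS \<beta> \<gamma>')" using S.isoW_comp[OF xo(1) ao(1) xo(1) ab gS] .
  have ah: "\<alpha> \<in> cHom CS x a" using ab unfolding isoW_def by blast
  have gS': "\<gamma> \<in> cHom CS a x" using gS unfolding isoW_def by blast
  have "cComp C f \<alpha> = cComp CS h (cComp CS \<gamma> \<alpha>)" using S.assoc[OF xo(1) ao(1) xo(1) d ah gS' h] g by simp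
  then show "simcls CS x d (cComp C f \<alpha>) = simcls CS x d h"
    using S.simcls_aut[OF xo(1) d h S.isoW_aut[OF c]] by simp
qed

lemma lower:
  assumes A: "A \<in> cOb C" and S: "finite S" "S \<subseteq> fiber CS U A"
    and pw: "\<forall>r1\<in>S. \<forall>r2\<in>S. isomorphic CS r1 r2 \<longrightarrow> r1 = r2"
    and fail: "\<forall>x\<in>S. \<not> small_ramsey_prop CS x (s x)"
    and t: "small_ramsey_prop C A t"
  shows "(\<Sum>x\<in>S. s x + 1) \<le> t"
proof (cases "S = {}")
  case True then show ?thesis by simp
next
  case False
  have "\<forall>x\<in>S. \<exists>k::nat. k \<ge> 2 \<and> (\<exists>B\<in>cOb CS. \<forall>D\<in>cOb CS. \<exists>\<chi>::'m set \<Rightarrow> nat. (\<forall>Y\<in>binom CS D x. \<chi> Y < k) \<and>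
      (\<forall>w\<in>cHom CS B D. s x < card (\<chi> ` binom_act CS D w B x)))"
    using fail unfolding small_ramsey_prop_def ramsey_arrow_def by (auto simp: not_le)
  then obtain K where K: "\<forall>x\<in>S. (K x::nat) \<ge> 2 \<and> (\<exists>B\<in>cOb CS. \<forall>D\<in>cOb CS. \<exists>\<chi>::'m set \<Rightarrow> nat. (\<forall>Y\<in>binom CS D x. \<chi> Y < K x) \<and>
      (\<forall>w\<in>cHom CS B D. s x < card (\<chi> ` binom_act CS D w B x)))"
    by (rule bchoice[elim_format]) blast
  then have "\<forall>x\<in>S. \<exists>B. B \<in> cOb CS \<and> (\<forall>D\<in>cOb CS. \<exists>\<chi>::'m set \<Rightarrow> nat. (\<forall>Y\<in>binom CS D x. \<chi> Y < K x) \<and>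
      (\<forall>w\<in>cHom CS B D. s x < card (\<chi> ` binom_act CS D w B x)))" by blast
  then obtain BB where BB: "\<forall>x\<in>S. BB x \<in> cOb CS \<and> (\<forall>D\<in>cOb CS. \<exists>\<chi>::'m set \<Rightarrow> nat. (\<forall>Y\<in>binom CS D x. \<chi> Y < K x) \<and>
      (\<forall>w\<in>cHom CS (BB x) D. s x < card (\<chi> ` binom_act CS D w (BB x) x)))"
    by (rule bchoice[elim_format]) blast
  then have "\<forall>p\<in>S \<times> cOb CS. \<exists>\<chi>::'m set \<Rightarrow> nat. (\<forall>Y\<in>binom CS (snd p) (fst p). \<chi> Y < K (fst p)) \<and>
      (\<forall>w\<in>cHom CS (BB (fst p)) (snd p). s (fst p) < card (\<chi> ` binom_act CS (snd p) w (BB (fst p)) (fst p)))"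
    by auto
  then obtain CH where CH: "\<forall>p\<in>S \<times> cOb CS. (\<forall>Y\<in>binom CS (snd p) (fst p). CH p Y < K (fst p)) \<and>
      (\<forall>w\<in>cHom CS (BB (fst p)) (snd p). s (fst p) < card (CH p ` binom_act CS (snd p) w (BB (fst p)) (fst p)))"
    by (rule bchoice[elim_format]) blast
  define CHI where "CHI x D = CH (x, D)" for x D
  have CHI: "\<forall>x\<in>S. \<forall>D\<in>cOb CS. (\<forall>Y\<in>binom CS D x. CHI x D Y < K x) \<and>
      (\<forall>w\<in>cHom CS (BB x) D. s x < card (CHI x D ` binom_act CS D w (BB x) x))"
    using CH unfolding CHI_def by auto
  obtain b0 where b0: "b0 \<in> cOb CS" "\<forall>x\<in>S. arr CS (BB x) b0"
  proof -
    have "BB ` S \<subseteq> cOb CS" using BB by blast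
    moreover have "finite (BB ` S)" "BB ` S \<noteq> {}" using S(1) False by auto
    ultimately show ?thesis using dir_bound[of "BB ` S"] that by blast
  qed
  obtain B where B: "B \<in> cOb C" "\<forall>a\<in>fiber CS U (U b0). \<forall>b\<in>fiber CS U B. arr CS a b"
    using ep U_ob[OF b0(1)] unfolding expansion_property_def by blast
  define n where "n = card S"
  define M where "M = Max (K ` S)"
  have n0: "n > 0" using S False n_def by (simp add: card_gt_0_iff)
  have KM: "\<forall>x\<in>S. K x \<le> M" using S M_def by simp
  obtain x0 where x0: "x0 \<in> S" using False by blast
  have M2: "M \<ge> 2" using K KM x0 by (meson order_trans)
  define k where "k = n * M"
  have "M \<le> n * M" using n0 by simp
  then have k2: "k \<ge> 2" using M2 k_def by linarith
  obtain D where D: "D \<in> cOb C" "ramsey_arrow C D B A k t"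
    using t k2 B(1) unfolding small_ramsey_prop_def by blast
  obtain d where d: "d \<in> fiber CS U D" using U_surj[OF D(1)] by blast
  have do: "d \<in> cOb CS" "U d = D" using d fiber_iff by auto
  obtain idx where idx: "bij_betw idx S {0..<n}" using ex_bij_betw_finite_nat[OF S(1)] n_def by blast
  define rs where "rs f = (THE a. a \<in> fiber CS U A \<and> f \<in> cHom CS a d)" for f
  have rs: "rs f \<in> fiber CS U A \<and> f \<in> cHom CS (rs f) d" if "f \<in> cHom C A D" for f
  proof -
    have "f \<in> cHom C A (U d)" using that do by simp
    from restr_ex1[OF do(1) A this] show ?thesis unfolding rs_def by (rule theI')
  qed
  define \<chi> where "\<chi> Y = (let f = SOME f. f \<in> Y; a = rs f in
     if \<exists>x\<in>S. isomorphic CS x a then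
       (let x = SOME x. x \<in> S \<and> isomorphic CS x a;
            \<alpha> = SOME \<alpha>. \<exists>\<beta>. isoW CS x a \<alpha> \<beta>
        in idx x + n * CHI x d (simcls CS x d (cComp C f \<alpha>)))
     else 0)" for Y
  have key: "\<chi> (simcls C A D h) = idx x + n * CHI x d (simcls CS x d h)" if x: "x \<in> S" and h: "h \<in> cHom CS x d" for x h
  proof -
    have xf: "x \<in> fiber CS U A" using x S by blast
    have xo: "x \<in> cOb CS" "U x = A" using xf fiber_iff by auto
    have hC: "h \<in> cHom C A D" using homS[OF xo(1) do(1) h] xo do by simp
    define f where "f = (SOME f. f \<in> simcls C A D h)"
    have f: "f \<in> simcls C A D h" unfolding f_def using C.simcls_self[OF A D(1) hC] by (rule someI)
    have fC: "f \<in> cHom C A D" using C.simcls_mem[OF f] by blast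
    have a: "rs f \<in> fiber CS U A" "f \<in> cHom CS (rs f) d" using rs[OF fC] by auto
    note ck = class_key[OF A do(1) xf h _ a, unfolded do]
    have ex1: "\<exists>x\<in>S. isomorphic CS x (rs f)" using ck(1)[OF f] x by blast
    define x' where "x' = (SOME x. x \<in> S \<and> isomorphic CS x (rs f))"
    have x': "x' \<in> S \<and> isomorphic CS x' (rs f)" unfolding x'_def using ex1 by (metis (no_types, lifting) someI)
    have x'o: "x' \<in> cOb CS" using x' S fiber_iff by blast
    have ao: "rs f \<in> cOb CS" using a fiber_iff by blast
    have "isomorphic CS x' x" using S.iso_trans[OF x'o ao xo(1)] x' S.iso_sym ck(1)[OF f] by blast
    then have xx: "x' = x" using pw x x' by blast
    define \<alpha> where "\<alpha> = (SOME \<alpha>. \<exists>\<beta>. isoW CS x (rs f) \<alpha> \<beta>)"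
    have "\<exists>\<alpha> \<beta>. isoW CS x (rs f) \<alpha> \<beta>" using ck(1)[OF f] unfolding isomorphic_isoW by blast
    then have al: "\<exists>\<beta>. isoW CS x (rs f) \<alpha> \<beta>" unfolding \<alpha>_def by (rule someI_ex)
    have "\<chi> (simcls C A D h) = idx x + n * CHI x d (simcls CS x d (cComp C f \<alpha>))"
      unfolding \<chi>_def Let_def using ex1 xx f_def x'_def \<alpha>_def by simp
    also have "\<dots> = idx x + n * CHI x d (simcls CS x d h)"
    proof -
      from al obtain \<beta> where "isoW CS x (rs f) \<alpha> \<beta>" by blast
      from ck(2)[OF f this] show ?thesis by simp
    qed
    finally show ?thesis .
  qed
  have chik: "\<chi> Y < k" if Y: "Y \<in> binom C D A" for Y
  proof -
    obtain f0 where f0: "f0 \<in> cHom C A D" "Y = simcls C A D f0" using Y unfolding binom_def by blast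
    define f where "f = (SOME f. f \<in> Y)"
    have f: "f \<in> Y" unfolding f_def using C.simcls_self[OF A D(1) f0(1)] f0(2) by (metis someI)
    have fC: "f \<in> cHom C A D" using C.simcls_mem f f0(2) by blast
    have a: "rs f \<in> fiber CS U A" "f \<in> cHom CS (rs f) d" using rs[OF fC] by auto
    have ao: "rs f \<in> cOb CS" using a fiber_iff by blast
    show ?thesis
    proof (cases "\<exists>x\<in>S. isomorphic CS x (rs f)")
      case False
      then have "\<chi> Y = 0" unfolding \<chi>_def Let_def f_def by simp
      then show ?thesis using k2 by simp
    next
      case True
      define x where "x = (SOME x. x \<in> S \<and> isomorphic CS x (rs f))"
      have x: "x \<in> S \<and> isomorphic CS x (rs f)" unfolding x_def using True by (metis (no_types, lifting) someI)
      have xo: "x \<in> cOb CS" using x S fiber_iff by blast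
      define \<alpha> where "\<alpha> = (SOME \<alpha>. \<exists>\<beta>. isoW CS x (rs f) \<alpha> \<beta>)"
      have "\<exists>\<alpha> \<beta>. isoW CS x (rs f) \<alpha> \<beta>" using x unfolding isomorphic_isoW by blast
      then have al: "\<exists>\<beta>. isoW CS x (rs f) \<alpha> \<beta>" unfolding \<alpha>_def by (rule someI_ex)
      have ah: "\<alpha> \<in> cHom CS x (rs f)" using al unfolding isoW_def by blast
      have fa: "cComp C f \<alpha> \<in> cHom CS x d" using S.comp_in[OF xo ao do(1) ah a(2)] by simp
      have "simcls CS x d (cComp C f \<alpha>) \<in> binom CS d x" unfolding binom_def using fa by blast
      then have "CHI x d (simcls CS x d (cComp C f \<alpha>)) < K x" using CHI x do(1) by blast
      moreover have "K x \<le> M" using KM x by blast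
      ultimately have c: "CHI x d (simcls CS x d (cComp C f \<alpha>)) < M" by linarith
      have ix: "idx x < n" using idx x unfolding bij_betw_def by auto
      have "\<chi> Y = idx x + n * CHI x d (simcls CS x d (cComp C f \<alpha>))"
        unfolding \<chi>_def Let_def using True f_def x_def \<alpha>_def by simp
      also have "\<dots> < n + n * CHI x d (simcls CS x d (cComp C f \<alpha>))" using ix by simp
      also have "\<dots> = n * (CHI x d (simcls CS x d (cComp C f \<alpha>)) + 1)" by simp
      also have "\<dots> \<le> n * M" using c by (intro mult_le_mono2) simp
      finally show ?thesis using k_def by simp
    qed
  qed
  obtain w where w: "w \<in> cHom C B D" "card (\<chi> ` binom_act C D w B A) \<le> t"
    using D(2) chik unfolding ramsey_arrow_def by blast
  obtain b' where b': "b' \<in> fiber CS U B" "w \<in> cHom CS b' d"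
    using restr_obtain[OF do(1) B(1)] w(1) do by metis
  have b'o: "b' \<in> cOb CS" "U b' = B" using b' fiber_iff by auto
  have b0f: "b0 \<in> fiber CS U (U b0)" using b0 fiber_iff by auto
  define I where "I x = (\<lambda>c. idx x + n * c) ` (CHI x d ` binom_act CS d (cComp C w (SOME u. u \<in> cHom CS (BB x) b')) (BB x) x)" for x
  have Isub: "I x \<subseteq> \<chi> ` binom_act C D w B A" and Icard: "card (I x) > s x" if x: "x \<in> S" for x
  proof -
    have xo: "x \<in> cOb CS" "U x = A" using x S fiber_iff by auto
    have Bx: "BB x \<in> cOb CS" using BB x by blast
    have "arr CS (BB x) b'" using S.arr_trans[OF Bx b0(1) b'o(1)] b0 B(2) b0f b' x by blast
    then have "\<exists>u. u \<in> cHom CS (BB x) b'" unfolding arr_def by blast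
    then have u: "(SOME u. u \<in> cHom CS (BB x) b') \<in> cHom CS (BB x) b'" by (rule someI_ex)
    define u where "u = (SOME u. u \<in> cHom CS (BB x) b')"
    have u': "u \<in> cHom CS (BB x) b'" using u u_def by simp
    have w': "cComp C w u \<in> cHom CS (BB x) d" using S.comp_in[OF Bx b'o(1) do(1) u' b'(2)] by simp
    have fin: "finite (CHI x d ` binom_act CS d (cComp C w u) (BB x) x)"
    proof (rule finite_subset[of _ "{..<K x}"])
      show "CHI x d ` binom_act CS d (cComp C w u) (BB x) x \<subseteq> {..<K x}"
      proof
        fix c assume "c \<in> CHI x d ` binom_act CS d (cComp C w u) (BB x) x"
        then obtain g where g: "g \<in> cHom CS x (BB x)" "c = CHI x d (simcls CS x d (cComp CS (cComp C w u) g))"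
          unfolding binom_act_def by auto
        have "cComp CS (cComp C w u) g \<in> cHom CS x d" using S.comp_in[OF xo(1) Bx do(1) g(1) w'] .
        then have "simcls CS x d (cComp CS (cComp C w u) g) \<in> binom CS d x" unfolding binom_def by blast
        then show "c \<in> {..<K x}" using CHI x do(1) g(2) by auto
      qed
    qed simp
    have "card (I x) = card (CHI x d ` binom_act CS d (cComp C w u) (BB x) x)"
      unfolding I_def u_def[symmetric] using n0 by (intro card_image) (auto simp: inj_on_def)
    then show "card (I x) > s x" using CHI x do(1) w' by auto
    show "I x \<subseteq> \<chi> ` binom_act C D w B A"
    proof
      fix c assume "c \<in> I x"
      then obtain g where g: "g \<in> cHom CS x (BB x)" "c = idx x + n * CHI x d (simcls CS x d (cComp CS (cComp C w u) g))"
        unfolding I_def u_def[symmetric] binom_act_def by auto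
      have wg: "cComp CS (cComp C w u) g \<in> cHom CS x d" using S.comp_in[OF xo(1) Bx do(1) g(1) w'] .
      have ug: "cComp C u g \<in> cHom CS x b'" using S.comp_in[OF xo(1) Bx b'o(1) g(1) u'] by simp
      have ugC: "cComp C u g \<in> cHom C A B" using homS[OF xo(1) b'o(1) ug] xo b'o by simp
      have eq: "cComp CS (cComp C w u) g = cComp C w (cComp C u g)"
        using S.assoc[OF xo(1) Bx b'o(1) do(1) g(1) u' b'(2)] by simp
      have "c = \<chi> (simcls C A D (cComp C w (cComp C u g)))" using key[OF x wg] g(2) eq by simp
      moreover have "simcls C A D (cComp C w (cComp C u g)) \<in> binom_act C D w B A"
        unfolding binom_act_def using ugC by blast
      ultimately show "c \<in> \<chi> ` binom_act C D w B A" by blast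
    qed
  qed
  have Ifin: "finite (I x)" if "x \<in> S" for x using Icard[OF that] by (metis card.infinite less_nat_zero_code)
  have disj: "I x \<inter> I y = {}" if "x \<in> S" "y \<in> S" "x \<noteq> y" for x y
  proof -
    have ix: "idx x < n" "idx y < n" "idx x \<noteq> idx y" using idx that unfolding bij_betw_def inj_on_def by auto
    { fix c c' assume "idx x + n * c = idx y + n * c'"
      then have "(idx x + n * c) mod n = (idx y + n * c') mod n" by simp
      then have False using ix by simp }
    then show ?thesis unfolding I_def by auto
  qed
  have "(\<Sum>x\<in>S. s x + 1) \<le> (\<Sum>x\<in>S. card (I x))" using Icard by (intro sum_mono) (simp add: Suc_le_eq)
  also have "\<dots> = card (\<Union>x\<in>S. I x)" by (rule card_UN_disjoint[symmetric]) (use S Ifin disj in auto)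
  also have "\<dots> \<le> card (\<chi> ` binom_act C D w B A)"
  proof (rule card_mono)
    show "finite (\<chi> ` binom_act C D w B A)"
    proof (rule finite_subset[of _ "{..<k}"])
      show "\<chi> ` binom_act C D w B A \<subseteq> {..<k}"
      proof
        fix c assume "c \<in> \<chi> ` binom_act C D w B A"
        then obtain f where f: "f \<in> cHom C A B" "c = \<chi> (simcls C A D (cComp C w f))" unfolding binom_act_def by auto
        have "cComp C w f \<in> cHom C A D" using C.comp_in[OF A B(1) D(1) f(1) w(1)] .
        then show "c \<in> {..<k}" using chik f(2) unfolding binom_def by auto
      qed
    qed simp
    show "(\<Union>x\<in>S. I x) \<subseteq> \<chi> ` binom_act C D w B A" using Isub by blast
  qed
  also have "\<dots> \<le> t" using w(2) .
  finally show ?thesis .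
qed


lemma upper_ind:
  assumes A: "A \<in> cOb C" and k: "k \<ge> 2" and R: "finite R" "R \<subseteq> fiber CS U A"
    and srp: "\<forall>r\<in>R. small_ramsey_prop CS r (s r)"
  shows "\<forall>b\<in>cOb CS. \<exists>e\<in>cOb CS. \<forall>\<chi>::'m set \<Rightarrow> nat. (\<forall>Y\<in>binom C (U e) A. \<chi> Y < k) \<longrightarrow>
     (\<exists>w\<in>cHom CS b e. card (\<chi> ` (\<Union>r\<in>R. (\<lambda>g. simcls C A (U e) (cComp C w g)) ` cHom CS r b)) \<le> (\<Sum>r\<in>R. s r))"
  using R srp
proof (induction R rule: finite_induct)
  case empty
  show ?case
  proof
    fix b assume b: "b \<in> cOb CS"
    show "\<exists>e\<in>cOb CS. \<forall>\<chi>::'m set \<Rightarrow> nat. (\<forall>Y\<in>binom C (U e) A. \<chi> Y < k) \<longrightarrow>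
     (\<exists>w\<in>cHom CS b e. card (\<chi> ` (\<Union>r\<in>{}. (\<lambda>g. simcls C A (U e) (cComp C w g)) ` cHom CS r b)) \<le> (\<Sum>r\<in>{}. s r))"
    proof (rule bexI[OF _ b])
      show "\<forall>\<chi>::'m set \<Rightarrow> nat. (\<forall>Y\<in>binom C (U b) A. \<chi> Y < k) \<longrightarrow>
     (\<exists>w\<in>cHom CS b b. card (\<chi> ` (\<Union>r\<in>{}. (\<lambda>g. simcls C A (U b) (cComp C w g)) ` cHom CS r b)) \<le> (\<Sum>r\<in>{}. s r))"
        using S.id_in[OF b] by auto
    qed
  qed
next
  case (insert r R)
  have r: "r \<in> fiber CS U A" and Rf: "R \<subseteq> fiber CS U A" using insert.prems by auto
  have ro: "r \<in> cOb CS" "U r = A" using r fiber_iff by auto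
  have IH: "\<forall>b\<in>cOb CS. \<exists>e\<in>cOb CS. \<forall>\<chi>::'m set \<Rightarrow> nat. (\<forall>Y\<in>binom C (U e) A. \<chi> Y < k) \<longrightarrow>
     (\<exists>w\<in>cHom CS b e. card (\<chi> ` (\<Union>r\<in>R. (\<lambda>g. simcls C A (U e) (cComp C w g)) ` cHom CS r b)) \<le> (\<Sum>r\<in>R. s r))"
    by (rule insert.IH) (use insert.prems in auto)
  have srpr: "small_ramsey_prop CS r (s r)" using insert.prems by blast
  show ?case
  proof
    fix b assume b: "b \<in> cOb CS"
    from srpr[unfolded small_ramsey_prop_def, rule_format, OF k b]
    obtain b1 where b1: "b1 \<in> cOb CS" "ramsey_arrow CS b1 b r k (s r)" by (rule bexE)
    from bspec[OF IH b1(1)] obtain e where e: "e \<in> cOb CS" and eP: "\<forall>\<chi>::'m set \<Rightarrow> nat. (\<forall>Y\<in>binom C (U e) A. \<chi> Y < k) \<longrightarrow>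
     (\<exists>w\<in>cHom CS b1 e. card (\<chi> ` (\<Union>r\<in>R. (\<lambda>g. simcls C A (U e) (cComp C w g)) ` cHom CS r b1)) \<le> (\<Sum>r\<in>R. s r))"
      by (rule bexE)
    have eC: "U e \<in> cOb C" using U_ob[OF e] .
    show "\<exists>e\<in>cOb CS. \<forall>\<chi>::'m set \<Rightarrow> nat. (\<forall>Y\<in>binom C (U e) A. \<chi> Y < k) \<longrightarrow>
     (\<exists>w\<in>cHom CS b e. card (\<chi> ` (\<Union>r\<in>insert r R. (\<lambda>g. simcls C A (U e) (cComp C w g)) ` cHom CS r b)) \<le> (\<Sum>r\<in>insert r R. s r))"
    proof (rule bexI[OF _ e], intro allI impI)
      fix \<chi> :: "'m set \<Rightarrow> nat" assume chi: "\<forall>Y\<in>binom C (U e) A. \<chi> Y < k"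
      from mp[OF spec[OF eP, of \<chi>] chi] obtain w1 where w1: "w1 \<in> cHom CS b1 e"
        "card (\<chi> ` (\<Union>r\<in>R. (\<lambda>g. simcls C A (U e) (cComp C w1 g)) ` cHom CS r b1)) \<le> (\<Sum>r\<in>R. s r)"
        by (rule bexE)
      have finchi: "finite (\<chi> ` Z)" if "Z \<subseteq> binom C (U e) A" for Z
        by (rule finite_subset[of _ "{..<k}"]) (use that chi in auto)
      have inb: "simcls C A (U e) (cComp C w1 h) \<in> binom C (U e) A" if "h \<in> cHom CS r b1" for h
      proof -
        have "cComp C w1 h \<in> cHom CS r e" using S.comp_in[OF ro(1) b1(1) e that w1(1)] by simp
        then have "cComp C w1 h \<in> cHom C A (U e)" using homS[OF ro(1) e] ro by simp
        then show ?thesis unfolding binom_def by blast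
      qed
      define \<chi>r where "\<chi>r Y = \<chi> (simcls C A (U e) (cComp C w1 (SOME h. h \<in> Y)))" for Y
      have chir_eq: "\<chi>r (simcls CS r b1 h) = \<chi> (simcls C A (U e) (cComp C w1 h))" if h: "h \<in> cHom CS r b1" for h
      proof -
        define h' where "h' = (SOME h'. h' \<in> simcls CS r b1 h)"
        have h': "h' \<in> simcls CS r b1 h" unfolding h'_def using S.simcls_self[OF ro(1) b1(1) h] by (rule someI)
        obtain \<gamma> where g: "\<gamma> \<in> Aut CS r" "h' = cComp CS h \<gamma>" using S.simcls_mem[OF h'] by blast
        have gh: "\<gamma> \<in> cHom CS r r" using g S.aut_hom by blast
        have gA: "\<gamma> \<in> Aut C A" using autS_sub[OF ro(1)] g ro by auto
        have "cComp C w1 h' = cComp C (cComp C w1 h) \<gamma>" using S.assoc[OF ro(1) ro(1) b1(1) e gh h w1(1)] g by simp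
        moreover have "cComp C w1 h \<in> cHom C A (U e)"
          using homS[OF ro(1) e] S.comp_in[OF ro(1) b1(1) e h w1(1)] ro by simp
        ultimately have "simcls C A (U e) (cComp C w1 h') = simcls C A (U e) (cComp C w1 h)"
          using C.simcls_aut[OF A eC _ gA] by simp
        then show ?thesis unfolding \<chi>r_def h'_def by simp
      qed
      have chirk: "\<forall>Y\<in>binom CS b1 r. \<chi>r Y < k"
      proof
        fix Y assume "Y \<in> binom CS b1 r"
        then obtain h where h: "h \<in> cHom CS r b1" "Y = simcls CS r b1 h" unfolding binom_def by blast
        show "\<chi>r Y < k" using chir_eq[OF h(1)] h(2) chi inb[OF h(1)] by simp
      qed
      from mp[OF spec[OF b1(2)[unfolded ramsey_arrow_def], of \<chi>r] chirk]
      obtain v where v: "v \<in> cHom CS b b1" "card (\<chi>r ` binom_act CS b1 v b r) \<le> s r" by (rule bexE)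
      define w where "w = cComp C w1 v"
      have w: "w \<in> cHom CS b e" using S.comp_in[OF b b1(1) e v(1) w1(1)] w_def by simp
      have P1: "\<chi> ` ((\<lambda>g. simcls C A (U e) (cComp C w g)) ` cHom CS r b) = \<chi>r ` binom_act CS b1 v b r"
      proof -
        have "\<chi> (simcls C A (U e) (cComp C w g)) = \<chi>r (simcls CS r b1 (cComp CS v g))" if g: "g \<in> cHom CS r b" for g
        proof -
          have vg: "cComp CS v g \<in> cHom CS r b1" using S.comp_in[OF ro(1) b b1(1) g v(1)] .
          have "cComp C w g = cComp C w1 (cComp C v g)" using S.assoc[OF ro(1) b b1(1) e g v(1) w1(1)] w_def by simp
          then show ?thesis using chir_eq[OF vg] by simp
        qed
        then show ?thesis unfolding binom_act_def image_image by (intro image_cong) auto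
      qed
      have P2: "(\<Union>r'\<in>R. (\<lambda>g. simcls C A (U e) (cComp C w g)) ` cHom CS r' b) \<subseteq>
                (\<Union>r'\<in>R. (\<lambda>g. simcls C A (U e) (cComp C w1 g)) ` cHom CS r' b1)"
      proof (intro subsetI)
        fix Y assume "Y \<in> (\<Union>r'\<in>R. (\<lambda>g. simcls C A (U e) (cComp C w g)) ` cHom CS r' b)"
        then obtain r' g where rg: "r' \<in> R" "g \<in> cHom CS r' b" "Y = simcls C A (U e) (cComp C w g)" by blast
        have r'o: "r' \<in> cOb CS" using rg(1) Rf fiber_iff by blast
        have vg: "cComp CS v g \<in> cHom CS r' b1" using S.comp_in[OF r'o b b1(1) rg(2) v(1)] .
        have "cComp C w g = cComp C w1 (cComp C v g)" using S.assoc[OF r'o b b1(1) e rg(2) v(1) w1(1)] w_def by simp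
        then show "Y \<in> (\<Union>r'\<in>R. (\<lambda>g. simcls C A (U e) (cComp C w1 g)) ` cHom CS r' b1)"
          using rg vg by auto
      qed
      have sub2: "(\<Union>r'\<in>R. (\<lambda>g. simcls C A (U e) (cComp C w1 g)) ` cHom CS r' b1) \<subseteq> binom C (U e) A"
      proof (intro subsetI)
        fix Y assume "Y \<in> (\<Union>r'\<in>R. (\<lambda>g. simcls C A (U e) (cComp C w1 g)) ` cHom CS r' b1)"
        then obtain r' g where rg: "r' \<in> R" "g \<in> cHom CS r' b1" "Y = simcls C A (U e) (cComp C w1 g)" by blast
        have r'o: "r' \<in> cOb CS" "U r' = A" using rg(1) Rf fiber_iff by auto
        have "cComp C w1 g \<in> cHom CS r' e" using S.comp_in[OF r'o(1) b1(1) e rg(2) w1(1)] by simp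
        then have "cComp C w1 g \<in> cHom C A (U e)" using homS[OF r'o(1) e] r'o by simp
        then show "Y \<in> binom C (U e) A" unfolding binom_def using rg(3) by blast
      qed
      have "card (\<chi> ` (\<Union>r'\<in>insert r R. (\<lambda>g. simcls C A (U e) (cComp C w g)) ` cHom CS r' b))
          = card (\<chi> ` ((\<lambda>g. simcls C A (U e) (cComp C w g)) ` cHom CS r b) \<union>
                  \<chi> ` (\<Union>r'\<in>R. (\<lambda>g. simcls C A (U e) (cComp C w g)) ` cHom CS r' b))"
        by (simp add: image_Un)
      also have "\<dots> \<le> card (\<chi> ` ((\<lambda>g. simcls C A (U e) (cComp C w g)) ` cHom CS r b)) +
                  card (\<chi> ` (\<Union>r'\<in>R. (\<lambda>g. simcls C A (U e) (cComp C w g)) ` cHom CS r' b))"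
        by (rule card_Un_le)
      also have "\<dots> \<le> s r + (\<Sum>r\<in>R. s r)"
      proof (rule add_mono)
        show "card (\<chi> ` ((\<lambda>g. simcls C A (U e) (cComp C w g)) ` cHom CS r b)) \<le> s r" using v(2) by (simp only: P1)
        have "card (\<chi> ` (\<Union>r'\<in>R. (\<lambda>g. simcls C A (U e) (cComp C w g)) ` cHom CS r' b))
           \<le> card (\<chi> ` (\<Union>r'\<in>R. (\<lambda>g. simcls C A (U e) (cComp C w1 g)) ` cHom CS r' b1))"
          by (rule card_mono[OF finchi[OF sub2] image_mono[OF P2]])
        then show "card (\<chi> ` (\<Union>r'\<in>R. (\<lambda>g. simcls C A (U e) (cComp C w g)) ` cHom CS r' b)) \<le> (\<Sum>r\<in>R. s r)"
          using w1(2) by linarith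
      qed
      also have "\<dots> = (\<Sum>r\<in>insert r R. s r)" using insert.hyps by simp
      finally show "\<exists>w\<in>cHom CS b e. card (\<chi> ` (\<Union>r\<in>insert r R. (\<lambda>g. simcls C A (U e) (cComp C w g)) ` cHom CS r b)) \<le> (\<Sum>r\<in>insert r R. s r)"
        by (rule bexI[OF _ w])
    qed
  qed
qed

lemma upper:
  assumes A: "A \<in> cOb C" and R: "finite R" "R \<subseteq> fiber CS U A"
    and cov: "\<forall>a\<in>fiber CS U A. \<exists>r\<in>R. isomorphic CS a r"
    and srp: "\<forall>r\<in>R. small_ramsey_prop CS r (s r)"
  shows "small_ramsey_prop C A (\<Sum>r\<in>R. s r)"
  unfolding small_ramsey_prop_def
proof (intro allI impI ballI)
  fix k :: nat and B assume k: "k \<ge> 2" and B: "B \<in> cOb C"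
  obtain bb where bb: "bb \<in> fiber CS U B" using U_surj[OF B] by blast
  have bbo: "bb \<in> cOb CS" "U bb = B" using bb fiber_iff by auto
  obtain B' where B': "B' \<in> cOb C" "\<forall>a\<in>fiber CS U B. \<forall>b\<in>fiber CS U B'. arr CS a b"
    using ep B unfolding expansion_property_def by blast
  obtain bb' where bb': "bb' \<in> fiber CS U B'" using U_surj[OF B'(1)] by blast
  have bbo': "bb' \<in> cOb CS" using bb' fiber_iff by auto
  obtain u where u: "u \<in> cHom CS bb bb'" using B'(2) bb bb' unfolding arr_def by blast
  from bspec[OF upper_ind[OF A k R srp] bbo'] obtain e where e: "e \<in> cOb CS" and eP: "\<forall>\<chi>::'m set \<Rightarrow> nat. (\<forall>Y\<in>binom C (U e) A. \<chi> Y < k) \<longrightarrow>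
     (\<exists>w\<in>cHom CS bb' e. card (\<chi> ` (\<Union>r\<in>R. (\<lambda>g. simcls C A (U e) (cComp C w g)) ` cHom CS r bb')) \<le> (\<Sum>r\<in>R. s r))"
    by (rule bexE)
  have eC: "U e \<in> cOb C" using U_ob[OF e] .
  show "\<exists>D\<in>cOb C. ramsey_arrow C D B A k (\<Sum>r\<in>R. s r)"
  proof (rule bexI[OF _ eC])
    show "ramsey_arrow C (U e) B A k (\<Sum>r\<in>R. s r)"
      unfolding ramsey_arrow_def
    proof (intro allI impI)
      fix \<chi> :: "'m set \<Rightarrow> nat" assume chi: "\<forall>Y\<in>binom C (U e) A. \<chi> Y < k"
      from mp[OF spec[OF eP, of \<chi>] chi] obtain w where w: "w \<in> cHom CS bb' e"
        "card (\<chi> ` (\<Union>r\<in>R. (\<lambda>g. simcls C A (U e) (cComp C w g)) ` cHom CS r bb')) \<le> (\<Sum>r\<in>R. s r)"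
        by (rule bexE)
      define W where "W = cComp C w u"
      have WS: "W \<in> cHom CS bb e" using S.comp_in[OF bbo(1) bbo' e u w(1)] W_def by simp
      have WC: "W \<in> cHom C B (U e)" using homS[OF bbo(1) e WS] bbo by simp
      have sub: "binom_act C (U e) W B A \<subseteq> (\<Union>r\<in>R. (\<lambda>g. simcls C A (U e) (cComp C w g)) ` cHom CS r bb')"
      proof
        fix Y assume "Y \<in> binom_act C (U e) W B A"
        then obtain f where f: "f \<in> cHom C A B" "Y = simcls C A (U e) (cComp C W f)" unfolding binom_act_def by blast
        obtain a where a: "a \<in> fiber CS U A" "f \<in> cHom CS a bb" using restr_obtain[OF bbo(1) A] f(1) bbo by metis
        have ao: "a \<in> cOb CS" using a fiber_iff by auto
        obtain r where r: "r \<in> R" "isomorphic CS a r" using cov a by blast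
        have rf: "r \<in> fiber CS U A" using r R by blast
        have ro: "r \<in> cOb CS" "U r = A" using rf fiber_iff by auto
        obtain \<alpha> \<beta> where ab: "isoW CS r a \<alpha> \<beta>" using r(2) S.isoW_sym unfolding isomorphic_isoW by blast
        have aA: "\<alpha> \<in> Aut C A" using C.isoW_aut isoW_S_C[OF rf a(1) ab] by blast
        have ah: "\<alpha> \<in> cHom CS r a" using ab unfolding isoW_def by blast
        have fa: "cComp C f \<alpha> \<in> cHom CS r bb" using S.comp_in[OF ro(1) ao bbo(1) ah a(2)] by simp
        have g: "cComp C u (cComp C f \<alpha>) \<in> cHom CS r bb'" using S.comp_in[OF ro(1) bbo(1) bbo' fa u] by simp
        have Wf: "cComp C W f \<in> cHom C A (U e)" using C.comp_in[OF A B eC f(1) WC] .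
        have "Y = simcls C A (U e) (cComp C (cComp C W f) \<alpha>)" using C.simcls_aut[OF A eC Wf aA] f(2) by simp
        also have "cComp C (cComp C W f) \<alpha> = cComp C W (cComp C f \<alpha>)"
          using S.assoc[OF ro(1) ao bbo(1) e ah a(2) WS] by simp
        also have "\<dots> = cComp C w (cComp C u (cComp C f \<alpha>))"
          using S.assoc[OF ro(1) bbo(1) bbo' e fa u w(1)] W_def by simp
        finally show "Y \<in> (\<Union>r\<in>R. (\<lambda>g. simcls C A (U e) (cComp C w g)) ` cHom CS r bb')"
          using r(1) g by blast
      qed
      have fin: "finite (\<chi> ` (\<Union>r\<in>R. (\<lambda>g. simcls C A (U e) (cComp C w g)) ` cHom CS r bb'))"
      proof (rule finite_subset[of _ "{..<k}"])
        show "\<chi> ` (\<Union>r\<in>R. (\<lambda>g. simcls C A (U e) (cComp C w g)) ` cHom CS r bb') \<subseteq> {..<k}"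
        proof
          fix c assume "c \<in> \<chi> ` (\<Union>r\<in>R. (\<lambda>g. simcls C A (U e) (cComp C w g)) ` cHom CS r bb')"
          then obtain r g where rg: "r \<in> R" "g \<in> cHom CS r bb'" "c = \<chi> (simcls C A (U e) (cComp C w g))" by blast
          have ro: "r \<in> cOb CS" "U r = A" using rg(1) R fiber_iff by auto
          have "cComp C w g \<in> cHom CS r e" using S.comp_in[OF ro(1) bbo' e rg(2) w(1)] by simp
          then have "cComp C w g \<in> cHom C A (U e)" using homS[OF ro(1) e] ro by simp
          then show "c \<in> {..<k}" using chi rg(3) unfolding binom_def by auto
        qed
      qed simp
      have "card (\<chi> ` binom_act C (U e) W B A) \<le> (\<Sum>r\<in>R. s r)"
        using card_mono[OF fin image_mono[OF sub]] w(2) by linarith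
      then show "\<exists>w\<in>cHom C B (U e). card (\<chi> ` binom_act C (U e) w B A) \<le> (\<Sum>r\<in>R. s r)"
        using WC by blast
    qed
  qed
qed

end

locale exp_A = exp_setup C CS U for C :: "('o,'m) cat" and CS :: "('e,'m) cat" and U :: "'e \<Rightarrow> 'o" +
  fixes A :: 'o assumes A: "A \<in> cOb C" and finAut: "finite (Aut C A)"
begin

abbreviation fib :: "'e set" where "fib \<equiv> fiber CS U A"

definition repset :: "'e set \<Rightarrow> bool" where
  "repset R \<longleftrightarrow> R \<subseteq> fib \<and> (\<forall>a\<in>fib. \<exists>r\<in>R. isomorphic CS a r) \<and>
     (\<forall>r1\<in>R. \<forall>r2\<in>R. isomorphic CS r1 r2 \<longrightarrow> r1 = r2)"

lemma fibo: "x \<in> fib \<Longrightarrow> x \<in> cOb CS" using fiber_iff by auto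

lemma isym: "isomorphic CS x y \<Longrightarrow> isomorphic CS y x" by (rule S.iso_sym)

lemma itrans: "x \<in> fib \<Longrightarrow> y \<in> fib \<Longrightarrow> z \<in> fib \<Longrightarrow> isomorphic CS x y \<Longrightarrow> isomorphic CS y z \<Longrightarrow> isomorphic CS x z"
  using S.iso_trans fibo by blast

definition pick :: "'e \<Rightarrow> 'e" where "pick x = (SOME y. y \<in> fib \<and> isomorphic CS y x)"

lemma pick: "x \<in> fib \<Longrightarrow> pick x \<in> fib \<and> isomorphic CS (pick x) x"
  unfolding pick_def by (rule someI[of _ x]) (use S.iso_refl fibo in blast)

lemma pick_eq: "x \<in> fib \<Longrightarrow> y \<in> fib \<Longrightarrow> isomorphic CS x y \<Longrightarrow> pick x = pick y"
proof -
  assume xy: "x \<in> fib" "y \<in> fib" "isomorphic CS x y"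
  have "(\<lambda>z. z \<in> fib \<and> isomorphic CS z x) = (\<lambda>z. z \<in> fib \<and> isomorphic CS z y)"
    using xy itrans isym by blast
  then show ?thesis unfolding pick_def by simp
qed

lemma pick_iff: "x \<in> fib \<Longrightarrow> y \<in> fib \<Longrightarrow> pick x = pick y \<longleftrightarrow> isomorphic CS x y"
  using pick_eq pick itrans isym by metis

lemma pick_pick: "x \<in> fib \<Longrightarrow> pick (pick x) = pick x"
  using pick pick_eq by blast

lemma repset_pick: "repset (pick ` fib)"
  unfolding repset_def
proof (intro conjI ballI impI)
  show "pick ` fib \<subseteq> fib" using pick by blast
next
  fix a assume a: "a \<in> fib"
  show "\<exists>r\<in>pick ` fib. isomorphic CS a r" using pick[OF a] isym a by blast
next
  fix r1 r2 assume r: "r1 \<in> pick ` fib" "r2 \<in> pick ` fib" "isomorphic CS r1 r2"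
  then obtain x y where xy: "x \<in> fib" "y \<in> fib" "r1 = pick x" "r2 = pick y" by blast
  have "pick r1 = pick r2" using pick_eq r(3) pick xy by blast
  then show "r1 = r2" using pick_pick xy by simp
qed

lemma repset_swap:
  assumes R: "repset R" and r: "r \<in> R" and a: "a \<in> fib" and ar: "isomorphic CS a r"
  shows "repset (insert a (R - {r}))" and "a \<notin> R - {r}"
proof -
  have Rf: "R \<subseteq> fib" and cov: "\<forall>a\<in>fib. \<exists>r\<in>R. isomorphic CS a r"
    and pw: "\<forall>r1\<in>R. \<forall>r2\<in>R. isomorphic CS r1 r2 \<longrightarrow> r1 = r2" using R unfolding repset_def by auto
  have rf: "r \<in> fib" using r Rf by blast
  show "a \<notin> R - {r}" using pw ar r by blast
  show "repset (insert a (R - {r}))" unfolding repset_def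
  proof (intro conjI ballI impI)
    show "insert a (R - {r}) \<subseteq> fib" using Rf a by blast
  next
    fix c assume c: "c \<in> fib"
    obtain r' where r': "r' \<in> R" "isomorphic CS c r'" using cov c by blast
    show "\<exists>x\<in>insert a (R - {r}). isomorphic CS c x"
    proof (cases "r' = r")
      case True
      then have "isomorphic CS c a" using itrans[OF c rf a] r' isym ar by blast
      then show ?thesis by blast
    next
      case False then show ?thesis using r' by blast
    qed
  next
    fix x y assume xy: "x \<in> insert a (R - {r})" "y \<in> insert a (R - {r})" "isomorphic CS x y"
    have bad: "False" if "z \<in> R - {r}" "isomorphic CS a z" for z
    proof -
      have "z \<in> fib" using that Rf by blast
      then have "isomorphic CS r z" using itrans[OF rf a] isym ar that by blast
      then show False using pw r that by blast
    qed
    show "x = y"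
    proof (cases "x = a")
      case True
      then show ?thesis using xy bad by blast
    next
      case False
      then have x: "x \<in> R - {r}" using xy by blast
      show ?thesis
      proof (cases "y = a")
        case True then show ?thesis using bad[OF x] xy isym by blast
      next
        case False then show ?thesis using x xy pw by blast
      qed
    qed
  qed
qed

lemma fib_nonempty: "fib \<noteq> {}" using U_surj[OF A] by blast

lemma fib_finite:
  assumes t: "tsim C A = enat t" shows "finite fib"
proof -
  have srpC: "small_ramsey_prop C A t" using C.tsim_fin(1)[OF A t] .
  define R0 where "R0 = pick ` fib"
  have R0: "repset R0" using repset_pick R0_def by simp
  have finR0: "finite R0"
  proof (rule ccontr)
    assume "\<not> finite R0"
    then obtain S where S: "finite S" "card S = Suc t" "S \<subseteq> R0" using infinite_arbitrarily_large by blast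
    have "(\<Sum>x\<in>S. 0 + 1) \<le> t"
    proof (rule lower[OF A S(1) _ _ _ srpC])
      show "S \<subseteq> fib" using S(3) R0 unfolding repset_def by blast
      show "\<forall>r1\<in>S. \<forall>r2\<in>S. isomorphic CS r1 r2 \<longrightarrow> r1 = r2" using S(3) R0 unfolding repset_def by blast
      show "\<forall>x\<in>S. \<not> small_ramsey_prop CS x 0" using S(3) R0 S.srp_zero fibo unfolding repset_def by blast
    qed
    then show False using S(2) by simp
  qed
  define H where "H r = (\<lambda>\<alpha>. THE a. a \<in> fib \<and> \<alpha> \<in> cHom CS a r) ` Aut C A" for r
  have "fib \<subseteq> (\<Union>r\<in>R0. H r)"
  proof
    fix a assume a: "a \<in> fib"
    obtain r where r: "r \<in> R0" "isomorphic CS a r" using R0 a unfolding repset_def by blast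
    have rf: "r \<in> fib" using r R0 unfolding repset_def by blast
    obtain f g where fg: "isoW CS a r f g" using r(2) unfolding isomorphic_isoW by blast
    have fA: "f \<in> Aut C A" using C.isoW_aut isoW_S_C[OF a rf fg] by blast
    have fh: "f \<in> cHom CS a r" using fg unfolding isoW_def by blast
    have "(THE a. a \<in> fib \<and> f \<in> cHom CS a r) = a"
    proof (rule the_equality)
      show "a \<in> fib \<and> f \<in> cHom CS a r" using a fh by blast
      fix x assume "x \<in> fib \<and> f \<in> cHom CS x r"
      then show "x = a" using restr_uniq[OF _ a fibo[OF rf] _ fh] by blast
    qed
    then have "a \<in> H r" unfolding H_def by (rule image_eqI[OF sym fA])
    then show "a \<in> (\<Union>r\<in>R0. H r)" using r(1) by blast
  qed
  moreover have "finite (\<Union>r\<in>R0. H r)" by (intro finite_UN_I finR0) (simp add: H_def finAut)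
  ultimately show ?thesis by (rule finite_subset)
qed

lemma all_fin:
  assumes t: "tsim C A = enat t" and a: "a \<in> fib" shows "tsim CS a \<noteq> \<infinity>"
proof
  assume inf: "tsim CS a = \<infinity>"
  have "(\<Sum>x\<in>{a}. t + 1) \<le> t"
    by (rule lower[OF A _ _ _ _ C.tsim_fin(1)[OF A t]]) (use a S.tsim_inf[OF fibo[OF a] inf] in auto)
  then show False by simp
qed

lemma tsum:
  assumes t: "tsim C A = enat t" and R: "repset R"
  shows "t = (\<Sum>r\<in>R. the_enat (tsim CS r))"
proof -
  have Rf: "R \<subseteq> fib" and cov: "\<forall>a\<in>fib. \<exists>r\<in>R. isomorphic CS a r"
    and pw: "\<forall>r1\<in>R. \<forall>r2\<in>R. isomorphic CS r1 r2 \<longrightarrow> r1 = r2" using R unfolding repset_def by auto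
  have finR: "finite R" using fib_finite[OF t] Rf finite_subset by blast
  have te: "tsim CS r = enat (the_enat (tsim CS r))" if "r \<in> R" for r
  proof -
    have "tsim CS r \<noteq> \<infinity>" using all_fin[OF t] that Rf by blast
    then show ?thesis by (cases "tsim CS r") auto
  qed
  have srp: "\<forall>r\<in>R. small_ramsey_prop CS r (the_enat (tsim CS r))"
    using S.tsim_fin(1) te Rf fibo by blast
  have "small_ramsey_prop C A (\<Sum>r\<in>R. the_enat (tsim CS r))" using upper[OF A finR Rf cov srp] .
  then have le1: "t \<le> (\<Sum>r\<in>R. the_enat (tsim CS r))" using C.tsim_fin(2)[OF A t] not_less by blast
  have pos: "the_enat (tsim CS r) > 0" if "r \<in> R" for r
    using S.srp_zero srp that Rf fibo by (metis gr0I subsetD)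
  have fail: "\<forall>r\<in>R. \<not> small_ramsey_prop CS r (the_enat (tsim CS r) - 1)"
  proof
    fix r assume r: "r \<in> R"
    show "\<not> small_ramsey_prop CS r (the_enat (tsim CS r) - 1)"
      using S.tsim_fin(2)[OF fibo te[OF r]] r Rf pos[OF r] by auto
  qed
  have "(\<Sum>r\<in>R. the_enat (tsim CS r) - 1 + 1) \<le> t" using lower[OF A finR Rf pw fail C.tsim_fin(1)[OF A t]] .
  moreover have "(\<Sum>r\<in>R. the_enat (tsim CS r) - 1 + 1) = (\<Sum>r\<in>R. the_enat (tsim CS r))"
    using pos by (intro sum.cong) auto
  ultimately show ?thesis using le1 by simp
qed

lemma tsim_inv:
  assumes t: "tsim C A = enat t" and a: "a \<in> fib" and b: "b \<in> fib" and ab: "isomorphic CS a b"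
  shows "the_enat (tsim CS a) = the_enat (tsim CS b)"
proof -
  define R0 where "R0 = pick ` fib"
  have R0: "repset R0" using repset_pick R0_def by simp
  have finR0: "finite R0" using fib_finite[OF t] R0_def by simp
  define r where "r = pick a"
  have r: "r \<in> R0" using a R0_def r_def by blast
  have ar: "isomorphic CS a r" using pick[OF a] isym r_def by blast
  have br: "isomorphic CS b r" using pick[OF b] isym pick_eq[OF a b ab] r_def by metis
  have "t = (\<Sum>x\<in>insert a (R0 - {r}). the_enat (tsim CS x))" using tsum[OF t repset_swap(1)[OF R0 r a ar]] .
  also have "\<dots> = the_enat (tsim CS a) + (\<Sum>x\<in>R0 - {r}. the_enat (tsim CS x))"
    using repset_swap(2)[OF R0 r a ar] finR0 by simp
  finally have 1: "t = the_enat (tsim CS a) + (\<Sum>x\<in>R0 - {r}. the_enat (tsim CS x))" .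
  have "t = (\<Sum>x\<in>insert b (R0 - {r}). the_enat (tsim CS x))" using tsum[OF t repset_swap(1)[OF R0 r b br]] .
  also have "\<dots> = the_enat (tsim CS b) + (\<Sum>x\<in>R0 - {r}. the_enat (tsim CS x))"
    using repset_swap(2)[OF R0 r b br] finR0 by simp
  finally show ?thesis using 1 by simp
qed


lemma orbit:
  assumes fin: "finite fib" and rf: "r \<in> fib"
  shows "(\<Sum>x\<in>{x\<in>fib. isomorphic CS x r}. card (Aut CS x)) = card (Aut C A)"
proof -
  have ro: "r \<in> cOb CS" "U r = A" using rf fiber_iff by auto
  define cls where "cls = {x\<in>fib. isomorphic CS x r}"
  define H where "H x = {\<alpha>\<in>Aut C A. \<alpha> \<in> cHom CS x r}" for x
  have finc: "finite cls" using fin cls_def by simp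
  have cover: "Aut C A = (\<Union>x\<in>cls. H x)"
  proof
    show "(\<Union>x\<in>cls. H x) \<subseteq> Aut C A" by (auto simp: H_def)
    show "Aut C A \<subseteq> (\<Union>x\<in>cls. H x)"
    proof
      fix \<alpha> assume \<alpha>: "\<alpha> \<in> Aut C A"
      have ah: "\<alpha> \<in> cHom C A (U r)" using C.aut_hom[OF \<alpha>] ro by simp
      obtain x where x: "x \<in> fib" "\<alpha> \<in> cHom CS x r" using restr_obtain[OF ro(1) A ah] by blast
      obtain \<beta> where ab: "isoW C A A \<alpha> \<beta>" using C.aut_isoW[OF \<alpha>] by blast
      have "isoW CS x r \<alpha> \<beta>" using aut_restr[OF A ab x(1) rf x(2)] .
      then have "x \<in> cls" unfolding cls_def isomorphic_isoW using x(1) by blast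
      moreover have "\<alpha> \<in> H x" unfolding H_def using \<alpha> x by blast
      ultimately show "\<alpha> \<in> (\<Union>x\<in>cls. H x)" by blast
    qed
  qed
  have disj: "\<forall>x\<in>cls. \<forall>y\<in>cls. x \<noteq> y \<longrightarrow> H x \<inter> H y = {}"
  proof (intro ballI impI)
    fix x y assume xy: "x \<in> cls" "y \<in> cls" "x \<noteq> y"
    show "H x \<inter> H y = {}"
    proof (rule ccontr)
      assume "H x \<inter> H y \<noteq> {}"
      then obtain \<alpha> where "\<alpha> \<in> cHom CS x r" "\<alpha> \<in> cHom CS y r" unfolding H_def by blast
      then have "x = y" using restr_uniq[of x A y r \<alpha>] xy ro cls_def by blast
      then show False using xy by blast
    qed
  qed
  have cardH: "card (H x) = card (Aut CS x)" if x: "x \<in> cls" for x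
  proof -
    have xf: "x \<in> fib" and xr: "isomorphic CS x r" using x cls_def by auto
    have xo: "x \<in> cOb CS" "U x = A" using xf fiber_iff by auto
    obtain f g where fg: "isoW CS x r f g" using xr unfolding isomorphic_isoW by blast
    have fA: "f \<in> Aut C A" using C.isoW_aut isoW_S_C[OF xf rf fg] by blast
    have fh: "f \<in> cHom CS x r" and gh: "g \<in> cHom CS r x" and fgid: "cComp CS f g = cId CS r"
      using fg unfolding isoW_def by auto
    have autx: "\<gamma> \<in> Aut C A" if "\<gamma> \<in> Aut CS x" for \<gamma> using autS_sub[OF xo(1)] that xo by auto
    have "bij_betw (\<lambda>\<gamma>. cComp C f \<gamma>) (Aut CS x) (H x)"
      unfolding bij_betw_def
    proof (intro conjI)
      show "inj_on (\<lambda>\<gamma>. cComp C f \<gamma>) (Aut CS x)"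
      proof (rule inj_onI)
        fix \<gamma> \<gamma>' assume g: "\<gamma> \<in> Aut CS x" "\<gamma>' \<in> Aut CS x" "cComp C f \<gamma> = cComp C f \<gamma>'"
        have "\<gamma> \<in> cHom C A A" "\<gamma>' \<in> cHom C A A" using C.aut_hom autx g by auto
        then show "\<gamma> = \<gamma>'" using mono g(3) C.aut_hom[OF fA] A unfolding all_mono_def by blast
      qed
      show "(\<lambda>\<gamma>. cComp C f \<gamma>) ` Aut CS x = H x"
      proof
        show "(\<lambda>\<gamma>. cComp C f \<gamma>) ` Aut CS x \<subseteq> H x"
        proof
          fix \<delta> assume "\<delta> \<in> (\<lambda>\<gamma>. cComp C f \<gamma>) ` Aut CS x"
          then obtain \<gamma> where g: "\<gamma> \<in> Aut CS x" "\<delta> = cComp C f \<gamma>" by blast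
          have "\<delta> \<in> Aut C A" using C.aut_comp[OF A fA autx[OF g(1)]] g by simp
          moreover have "\<delta> \<in> cHom CS x r" using S.comp_in[OF xo(1) xo(1) ro(1) S.aut_hom[OF g(1)] fh] g by simp
          ultimately show "\<delta> \<in> H x" unfolding H_def by blast
        qed
        show "H x \<subseteq> (\<lambda>\<gamma>. cComp C f \<gamma>) ` Aut CS x"
        proof
          fix \<alpha> assume "\<alpha> \<in> H x"
          then have \<alpha>: "\<alpha> \<in> Aut C A" "\<alpha> \<in> cHom CS x r" unfolding H_def by auto
          obtain \<beta> where ab: "isoW C A A \<alpha> \<beta>" using C.aut_isoW[OF \<alpha>(1)] by blast
          have abS: "isoW CS x r \<alpha> \<beta>" using aut_restr[OF A ab xf rf \<alpha>(2)] .
          have "isoW CS x x (cComp CS g \<alpha>) (cComp CS \<beta> f)"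
            using S.isoW_comp[OF xo(1) ro(1) xo(1) abS S.isoW_sym[OF fg]] .
          then have gA: "cComp C g \<alpha> \<in> Aut CS x" using S.isoW_aut by simp
          have "cComp C f (cComp C g \<alpha>) = cComp C (cComp C f g) \<alpha>"
            using S.assoc[OF xo(1) ro(1) xo(1) ro(1) \<alpha>(2) gh fh] by simp
          also have "\<dots> = \<alpha>" using fgid S.id_l[OF xo(1) ro(1) \<alpha>(2)] by simp
          finally show "\<alpha> \<in> (\<lambda>\<gamma>. cComp C f \<gamma>) ` Aut CS x" using gA by (metis image_eqI)
        qed
      qed
    qed
    then show ?thesis by (metis bij_betw_same_card)
  qed
  have "card (Aut C A) = card (\<Union>x\<in>cls. H x)" using cover by simp
  also have "\<dots> = (\<Sum>x\<in>cls. card (H x))"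
    by (rule card_UN_disjoint[OF finc _ disj]) (use finAut cover in \<open>auto intro: finite_subset\<close>)
  also have "\<dots> = (\<Sum>x\<in>cls. card (Aut CS x))" using cardH by simp
  finally show ?thesis unfolding cls_def by simp
qed

lemma weighted:
  assumes t: "tsim C A = enat t"
  shows "real t = (\<Sum>a\<in>fib. real (card (Aut CS a)) / real (card (Aut C A)) * real (the_enat (tsim CS a)))"
proof -
  have fin: "finite fib" using fib_finite[OF t] .
  define R0 where "R0 = pick ` fib"
  have finR0: "finite R0" using fin R0_def by simp
  define N where "N = real (card (Aut C A))"
  have Npos: "N > 0" unfolding N_def using finAut C.aut_id[OF A] card_gt_0_iff by fastforce
  define T where "T x = real (the_enat (tsim CS x))" for x
  define h where "h a = real (card (Aut CS a)) / N * T a" for a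
  have "(\<Sum>a\<in>fib. h a) = (\<Sum>y\<in>R0. \<Sum>x\<in>{x. x \<in> fib \<and> pick x = y}. h x)"
    by (rule sum.group[symmetric]) (use fin finR0 R0_def in auto)
  also have "\<dots> = (\<Sum>y\<in>R0. T y)"
  proof (rule sum.cong[OF refl])
    fix y assume y: "y \<in> R0"
    then obtain y0 where y0: "y0 \<in> fib" "y = pick y0" using R0_def by blast
    have yf: "y \<in> fib" using pick y0 by blast
    have py: "pick y = y" using pick_pick y0 by simp
    have set: "{x. x \<in> fib \<and> pick x = y} = {x\<in>fib. isomorphic CS x y}"
      using pick_iff[OF _ yf] py by auto
    have "(\<Sum>x\<in>{x\<in>fib. isomorphic CS x y}. h x) = (\<Sum>x\<in>{x\<in>fib. isomorphic CS x y}. T y / N * real (card (Aut CS x)))"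
    proof (rule sum.cong[OF refl])
      fix x assume "x \<in> {x\<in>fib. isomorphic CS x y}"
      then have "T x = T y" unfolding T_def using tsim_inv[OF t _ yf] by auto
      then show "h x = T y / N * real (card (Aut CS x))" unfolding h_def by simp
    qed
    also have "\<dots> = T y / N * real (\<Sum>x\<in>{x\<in>fib. isomorphic CS x y}. card (Aut CS x))"
      by (simp add: sum_distrib_left)
    also have "\<dots> = T y" using orbit[OF fin yf] Npos N_def by simp
    finally show "(\<Sum>x\<in>{x. x \<in> fib \<and> pick x = y}. h x) = T y" using set by simp
  qed
  also have "\<dots> = real (\<Sum>y\<in>R0. the_enat (tsim CS y))" unfolding T_def by simp
  also have "\<dots> = real t" using tsum[OF t repset_pick] R0_def by simp
  finally show ?thesis unfolding h_def N_def T_def by simp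
qed

end

theorem corollary6p4:
  fixes C :: "('o, 'm) cat" and CS :: "('e, 'm) cat" and U :: "'e \<Rightarrow> 'o" and A :: 'o
  assumes "expansion CS C U"
    and "reasonable CS C U"
    and "unique_restrictions CS C U"
    and "expansion_property CS C U"
    and "all_mono C"
    and "directed CS"
    and "A \<in> cOb C"
    and "finite (Aut C A)"
  shows
    "(tsim C A \<noteq> \<infinity> \<longleftrightarrow>
        finite (fiber CS U A) \<and> (\<forall>a\<in>fiber CS U A. tsim CS a \<noteq> \<infinity>)) \<and>
     (tsim C A \<noteq> \<infinity> \<longrightarrow>
        real (the_enat (tsim C A)) =
          (\<Sum>a\<in>fiber CS U A. real (card (Aut CS a)) / real (card (Aut C A))
                               * real (the_enat (tsim CS a)))) \<and>
     (\<forall>R. finite (fiber CS U A) \<and> (\<forall>a\<in>fiber CS U A. tsim CS a \<noteq> \<infinity>) \<and>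
          R \<subseteq> fiber CS U A \<and>
          (\<forall>a\<in>fiber CS U A. \<exists>r\<in>R. isomorphic CS a r) \<and>
          (\<forall>r1\<in>R. \<forall>r2\<in>R. isomorphic CS r1 r2 \<longrightarrow> r1 = r2)
        \<longrightarrow> tsim C A = (\<Sum>r\<in>R. tsim CS r))"
proof -
  interpret E: exp_A C CS U A
    using assms unfolding exp_A_def exp_A_axioms_def exp_setup_def by blast
  have bkw: "tsim C A \<noteq> \<infinity>" if fin: "finite (fiber CS U A)" and allf: "\<forall>a\<in>fiber CS U A. tsim CS a \<noteq> \<infinity>"
  proof -
    define R0 where "R0 = E.pick ` fiber CS U A"
    have R0: "E.repset R0" using E.repset_pick R0_def by simp
    have R0f: "R0 \<subseteq> fiber CS U A" and cov: "\<forall>a\<in>fiber CS U A. \<exists>r\<in>R0. isomorphic CS a r"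
      using R0 unfolding E.repset_def by auto
    have finR0: "finite R0" using fin R0_def by simp
    have "\<forall>r\<in>R0. small_ramsey_prop CS r (the_enat (tsim CS r))"
    proof
      fix r assume r: "r \<in> R0"
      have "tsim CS r \<noteq> \<infinity>" using allf r R0f by blast
      then have "tsim CS r = enat (the_enat (tsim CS r))" by (cases "tsim CS r") auto
      then show "small_ramsey_prop CS r (the_enat (tsim CS r))" using E.S.tsim_fin(1) E.fibo r R0f by blast
    qed
    then have "small_ramsey_prop C A (\<Sum>r\<in>R0. the_enat (tsim CS r))"
      by (rule E.upper[OF E.A finR0 R0f cov])
    then show ?thesis using E.C.tsim_le[OF E.A] by blast
  qed
  have P1: "tsim C A \<noteq> \<infinity> \<longleftrightarrow> finite (fiber CS U A) \<and> (\<forall>a\<in>fiber CS U A. tsim CS a \<noteq> \<infinity>)"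
  proof
    assume "tsim C A \<noteq> \<infinity>"
    then obtain t where t: "tsim C A = enat t" by (cases "tsim C A") auto
    show "finite (fiber CS U A) \<and> (\<forall>a\<in>fiber CS U A. tsim CS a \<noteq> \<infinity>)"
      using E.fib_finite[OF t] E.all_fin[OF t] by blast
  next
    assume "finite (fiber CS U A) \<and> (\<forall>a\<in>fiber CS U A. tsim CS a \<noteq> \<infinity>)"
    then show "tsim C A \<noteq> \<infinity>" using bkw by blast
  qed
  have P2: "tsim C A \<noteq> \<infinity> \<longrightarrow>
        real (the_enat (tsim C A)) =
          (\<Sum>a\<in>fiber CS U A. real (card (Aut CS a)) / real (card (Aut C A))
                               * real (the_enat (tsim CS a)))"
  proof
    assume "tsim C A \<noteq> \<infinity>"
    then obtain t where t: "tsim C A = enat t" by (cases "tsim C A") auto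
    show "real (the_enat (tsim C A)) =
          (\<Sum>a\<in>fiber CS U A. real (card (Aut CS a)) / real (card (Aut C A))
                               * real (the_enat (tsim CS a)))"
      using E.weighted[OF t] t by simp
  qed
  have P3: "\<forall>R. finite (fiber CS U A) \<and> (\<forall>a\<in>fiber CS U A. tsim CS a \<noteq> \<infinity>) \<and>
          R \<subseteq> fiber CS U A \<and>
          (\<forall>a\<in>fiber CS U A. \<exists>r\<in>R. isomorphic CS a r) \<and>
          (\<forall>r1\<in>R. \<forall>r2\<in>R. isomorphic CS r1 r2 \<longrightarrow> r1 = r2)
        \<longrightarrow> tsim C A = (\<Sum>r\<in>R. tsim CS r)"
  proof (intro allI impI)
    fix R assume H: "finite (fiber CS U A) \<and> (\<forall>a\<in>fiber CS U A. tsim CS a \<noteq> \<infinity>) \<and>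
          R \<subseteq> fiber CS U A \<and>
          (\<forall>a\<in>fiber CS U A. \<exists>r\<in>R. isomorphic CS a r) \<and>
          (\<forall>r1\<in>R. \<forall>r2\<in>R. isomorphic CS r1 r2 \<longrightarrow> r1 = r2)"
    have R: "E.repset R" using H unfolding E.repset_def by blast
    have "tsim C A \<noteq> \<infinity>" using bkw H by blast
    then obtain t where t: "tsim C A = enat t" by (cases "tsim C A") auto
    have tt: "t = (\<Sum>r\<in>R. the_enat (tsim CS r))" using E.tsum[OF t R] .
    have eq: "tsim CS r = enat (the_enat (tsim CS r))" if "r \<in> R" for r
    proof -
      have "tsim CS r \<noteq> \<infinity>" using H that by blast
      then show ?thesis by (cases "tsim CS r") auto
    qed
    have "tsim C A = enat (\<Sum>r\<in>R. the_enat (tsim CS r))" using t tt by simp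
    also have "\<dots> = (\<Sum>r\<in>R. enat (the_enat (tsim CS r)))" by (simp add: of_nat_eq_enat[symmetric])
    also have "\<dots> = (\<Sum>r\<in>R. tsim CS r)" using eq by (intro sum.cong) auto
    finally show "tsim C A = (\<Sum>r\<in>R. tsim CS r)" .
  qed
  show ?thesis using P1 P2 P3 by blast
qed

end
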